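(* Let $0\le B<B_n$, where $B_n=\dfrac{4\sqrt3}{\sqrt{169+38\sqrt{19}}}$. Put $$Z(r)=2r-3-B^2r^2\Big(\tfrac32 r-\tfrac54\Big),\qquad b(r)=1+\tfrac{B^2r^2}{4},$$ let $(r_1,r_2)=\{r>1: Z(r)>0\}$ (with $r_2=+\infty$ when $B=0$), and for $r_c\in(r_1,r_2)$ define $$L(r_c)=\frac{r_c}{b}\sqrt{\frac{4(b-1)(r_c-1)+b}{Z(r_c)}},\qquad E(r_c)=b\,(r_c-1)\sqrt{\frac{4-B^2r_c^2}{2r_cZ(r_c)}},\qquad b=b(r_c).$$ For $L=L(r_c)$, $E=E(r_c)$ the point $(p_r,p_\theta,r,\theta)=(0,0,r_c,\pi/2)$ is a fixed point of the Hamiltonian system with Hamiltonian $$H=\frac{\Gamma}{2\Lambda^2}p_r^2+\frac{p_\theta^2}{2r^2\Lambda^2}+\frac{L^2\Lambda^2}{2r^2\sin^2\theta}-\frac{E^2}{2\Lambda^2\Gamma},\quad \Lambda=1+\frac{B^2}{4}r^2\sin^2\theta,\quad \Gamma=1-\frac1r,$$ lying on the level set $H=-\tfrac12$. Let $$N(r)=64(r-3)+(4Br)^2(16r^2-39r+21)-4(Br)^4(24r^2-51r+25)+(Br)^6(24r^2-37r+15).$$ Then there is $r_*\in(r_1,r_2)$ with $N(r_* )=0$ such that: for $r_c\in(r_1,r_* )$ this fixed point is unstable, of saddle-center type, and for $r_c\in(r_*,r_2)$ it is stable, of center-center type (the effective potential has a strict minimum there). In particular $r_*=3$ when $B=0$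.
   Context: This is the reduced Hamiltonian system (canonical variables $(p_r,p_\theta,r,\theta)$, $r>1$, $0<\theta<\pi$) for time-like geodesics of neutral particles in the Schwarzschild–Melvin spacetime in dimensionless units (horizon at $r=1$), obtained by eliminating the cyclic coordinates $t,\varphi$ with conserved energy $E>0$ and angular momentum $L>0$; physical trajectories lie on $H=-1/2$. Fixed points with $\theta=\pi/2$ correspond to circular orbits in the equatorial plane. The effective potential is the $p$-independent part of $H$. *)

theory Defs
  imports "HOL-Analysis.Analysis"
begin

text \<open>Schwarzschild--Melvin neutral geodesics, reduced Hamiltonian system.
  Phase-space points are vectors z :: real^4 with
  z$1 = p_r, z$2 = p_theta, z$3 = r, z$4 = theta.\<close>

definition Bn :: real where
  "Bn = 4 * sqrt 3 / sqrt (169 + 38 * sqrt 19)"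

definition Lam :: "real \<Rightarrow> real \<Rightarrow> real \<Rightarrow> real" where
  "Lam B r th = 1 + B^2 / 4 * r^2 * (sin th)^2"

definition Gam :: "real \<Rightarrow> real" where
  "Gam r = 1 - 1 / r"

definition Ham :: "real \<Rightarrow> real \<Rightarrow> real \<Rightarrow> real^4 \<Rightarrow> real" where
  "Ham B L E z =
     Gam (z$3) / (2 * (Lam B (z$3) (z$4))^2) * (z$1)^2
     + (z$2)^2 / (2 * (z$3)^2 * (Lam B (z$3) (z$4))^2)
     + L^2 * (Lam B (z$3) (z$4))^2 / (2 * (z$3)^2 * (sin (z$4))^2)
     - E^2 / (2 * (Lam B (z$3) (z$4))^2 * Gam (z$3))"

definition Veff :: "real \<Rightarrow> real \<Rightarrow> real \<Rightarrow> real \<Rightarrow> real \<Rightarrow> real" where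
  "Veff B L E r th =
     L^2 * (Lam B r th)^2 / (2 * r^2 * (sin th)^2) - E^2 / (2 * (Lam B r th)^2 * Gam r)"

definition phase_pt :: "real \<Rightarrow> real \<Rightarrow> real \<Rightarrow> real \<Rightarrow> real^4" where
  "phase_pt pr pt r th = (\<chi> i. if i = 1 then pr else if i = 2 then pt else if i = 3 then r else th)"

definition pd :: "(real^4 \<Rightarrow> real) \<Rightarrow> 4 \<Rightarrow> real^4 \<Rightarrow> real" where
  "pd f i z = deriv (\<lambda>t. f (z + t *\<^sub>R axis i 1)) 0"

text \<open>Symplectic matrix: dp/dt = - dH/dq, dq/dt = dH/dp.\<close>
definition Jmat :: "real^4^4" where
  "Jmat = (\<chi> i j. if i = 1 \<and> j = 3 then -1 else if i = 2 \<and> j = 4 then -1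
                  else if i = 3 \<and> j = 1 then 1 else if i = 4 \<and> j = 2 then 1 else 0)"

definition HamVF :: "real \<Rightarrow> real \<Rightarrow> real \<Rightarrow> real^4 \<Rightarrow> real^4" where
  "HamVF B L E z = (\<chi> i. \<Sum>j\<in>UNIV. Jmat$i$j * pd (Ham B L E) j z)"

definition linHam :: "real \<Rightarrow> real \<Rightarrow> real \<Rightarrow> real^4 \<Rightarrow> real^4^4" where
  "linHam B L E z = (\<chi> i j. \<Sum>k\<in>UNIV. Jmat$i$k * pd (pd (Ham B L E) k) j z)"

definition spec4 :: "real^4^4 \<Rightarrow> complex set" where
  "spec4 A = {\<mu>. det ((\<chi> i j. (if i = j then \<mu> else 0) - complex_of_real (A$i$j)) :: complex^4^4) = 0}"

definition saddle_center :: "real^4^4 \<Rightarrow> bool" where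
  "saddle_center A \<longleftrightarrow> (\<exists>lam w. lam > 0 \<and> w > 0 \<and>
      spec4 A = {complex_of_real lam, - complex_of_real lam, \<i> * complex_of_real w, - \<i> * complex_of_real w})"

definition center_center :: "real^4^4 \<Rightarrow> bool" where
  "center_center A \<longleftrightarrow> (\<exists>w1 w2. w1 > 0 \<and> w2 > 0 \<and>
      spec4 A = {\<i> * complex_of_real w1, - \<i> * complex_of_real w1,
                 \<i> * complex_of_real w2, - \<i> * complex_of_real w2})"

definition lin_unstable :: "real^4^4 \<Rightarrow> bool" where
  "lin_unstable A \<longleftrightarrow> (\<exists>\<mu>\<in>spec4 A. Re \<mu> > 0)"

definition strict_local_min2 :: "(real \<Rightarrow> real \<Rightarrow> real) \<Rightarrow> real \<Rightarrow> real \<Rightarrow> bool" where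
  "strict_local_min2 V x0 y0 \<longleftrightarrow> (\<exists>e>0. \<forall>x y. (x, y) \<noteq> (x0, y0) \<and> dist (x, y) (x0, y0) < e
       \<longrightarrow> V x y > V x0 y0)"

definition Zf :: "real \<Rightarrow> real \<Rightarrow> real" where
  "Zf B r = 2 * r - 3 - B^2 * r^2 * (3/2 * r - 5/4)"

definition bf :: "real \<Rightarrow> real \<Rightarrow> real" where
  "bf B r = 1 + B^2 * r^2 / 4"

definition Lc :: "real \<Rightarrow> real \<Rightarrow> real" where
  "Lc B rc = rc / bf B rc * sqrt ((4 * (bf B rc - 1) * (rc - 1) + bf B rc) / Zf B rc)"

definition Ec :: "real \<Rightarrow> real \<Rightarrow> real" where
  "Ec B rc = bf B rc * (rc - 1) * sqrt ((4 - B^2 * rc^2) / (2 * rc * Zf B rc))"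

definition Nf :: "real \<Rightarrow> real \<Rightarrow> real" where
  "Nf B r = 64 * (r - 3) + (4 * B * r)^2 * (16 * r^2 - 39 * r + 21)
            - 4 * (B * r)^4 * (24 * r^2 - 51 * r + 25) + (B * r)^6 * (24 * r^2 - 37 * r + 15)"

end

theory Submission
  imports Defs
begin


lemma pp_comp[simp]:
  "phase_pt a b c d $ 1 = a" "phase_pt a b c d $ 2 = b"
  "phase_pt a b c d $ 3 = c" "phase_pt a b c d $ 4 = d"
  by (simp_all add: phase_pt_def)

lemma pp_axis:
  "phase_pt a b c d + t *\<^sub>R axis 1 1 = phase_pt (a+t) b c d"
  "phase_pt a b c d + t *\<^sub>R axis 2 1 = phase_pt a (b+t) c d"
  "phase_pt a b c d + t *\<^sub>R axis 3 1 = phase_pt a b (c+t) d"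
  "phase_pt a b c d + t *\<^sub>R axis 4 1 = phase_pt a b c (d+t)"
  by (simp_all add: vec_eq_iff phase_pt_def axis_def forall_4)

definition hh :: "real \<Rightarrow> real \<Rightarrow> real \<Rightarrow> real \<Rightarrow> real \<Rightarrow> real \<Rightarrow> real \<Rightarrow> real" where
  "hh B L E pr pt r th = Gam r / (2 * (Lam B r th)^2) * pr^2 + pt^2 / (2 * r^2 * (Lam B r th)^2) + Veff B L E r th"

lemma Ham_pp: "Ham B L E (phase_pt pr pt r th) = hh B L E pr pt r th"
  by (simp add: Ham_def hh_def Veff_def)

lemma pd_pp:
  "pd f 1 (phase_pt a b c d) = deriv (\<lambda>t. f (phase_pt (a+t) b c d)) 0"
  "pd f 2 (phase_pt a b c d) = deriv (\<lambda>t. f (phase_pt a (b+t) c d)) 0"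
  "pd f 3 (phase_pt a b c d) = deriv (\<lambda>t. f (phase_pt a b (c+t) d)) 0"
  "pd f 4 (phase_pt a b c d) = deriv (\<lambda>t. f (phase_pt a b c (d+t))) 0"
  by (simp_all add: pd_def pp_axis)

lemma quad_deriv: "deriv (\<lambda>t. c * (p + t)^2 + d) 0 = 2 * c * p"
  by (rule DERIV_imp_deriv) (auto intro!: derivative_eq_intros)

lemma pd1: "pd (Ham B L E) 1 (phase_pt pr pt r th) = Gam r / (Lam B r th)^2 * pr"
proof -
  have e: "(\<lambda>t. Ham B L E (phase_pt (pr+t) pt r th)) = (\<lambda>t. (Gam r / (2 * (Lam B r th)^2)) * (pr+t)^2
      + (pt^2 / (2 * r^2 * (Lam B r th)^2) + Veff B L E r th))"
    by (simp add: Ham_pp hh_def ac_simps)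
  show ?thesis unfolding pd_pp e quad_deriv by (simp add: field_simps)
qed

lemma pd2: "pd (Ham B L E) 2 (phase_pt pr pt r th) = pt / (r^2 * (Lam B r th)^2)"
proof -
  have e: "(\<lambda>t. Ham B L E (phase_pt pr (pt+t) r th)) = (\<lambda>t. (1 / (2 * r^2 * (Lam B r th)^2)) * (pt+t)^2
      + (Gam r / (2 * (Lam B r th)^2) * pr^2 + Veff B L E r th))"
    by (simp add: Ham_pp hh_def ac_simps)
  show ?thesis unfolding pd_pp e quad_deriv by (simp add: field_simps)
qed

definition lam :: "real \<Rightarrow> real \<Rightarrow> real \<Rightarrow> real" where
  "lam B r u = 1 + B^2/4*r^2*u"

lemma lam_dr[derivative_intros]: "((\<lambda>r. lam B r u) has_real_derivative B^2/2*r*u) (at r)"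
  unfolding lam_def by (auto intro!: derivative_eq_intros)

lemma lam_du[derivative_intros]: "((\<lambda>u. lam B r u) has_real_derivative B^2/4*r^2) (at u)"
  unfolding lam_def by (auto intro!: derivative_eq_intros)

lemma lam_pos: "0 \<le> u \<Longrightarrow> 0 < lam B r u"
  unfolding lam_def by (simp add: add_pos_nonneg)

definition Wf :: "real \<Rightarrow> real \<Rightarrow> real \<Rightarrow> real \<Rightarrow> real \<Rightarrow> real" where
  "Wf B L E r u = L^2 / (2*u) * ((lam B r u)^2 / r^2) - E^2 / 2 * (r / ((lam B r u)^2 * (r - 1)))"

definition Wr :: "real \<Rightarrow> real \<Rightarrow> real \<Rightarrow> real \<Rightarrow> real \<Rightarrow> real" where
  "Wr B L E r u = L^2 / (2*u) * (2 * lam B r u * (r * (B^2/2*r*u) - lam B r u) / r^3)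
     - E^2 / 2 * (- (lam B r u + 2 * r * (B^2/2*r*u) * (r - 1)) / ((lam B r u)^3 * (r - 1)^2))"

definition Wu :: "real \<Rightarrow> real \<Rightarrow> real \<Rightarrow> real \<Rightarrow> real \<Rightarrow> real" where
  "Wu B L E r u = L^2 / (2 * r^2) * ((2 * lam B r u * (B^2/4*r^2) * u - (lam B r u)^2) / u^2)
     - E^2 * r / (2 * (r - 1)) * (- 2 * (B^2/4*r^2) / (lam B r u)^3)"

lemma Veff_W: assumes "1 < r" shows "Veff B L E r th = Wf B L E r ((sin th)^2)"
proof -
  have "1 - 1/r = (r-1)/r" using assms by (simp add: field_simps)
  then show ?thesis by (simp add: Veff_def Wf_def Lam_def Gam_def lam_def ac_simps)
qed

lemma P1_dr: assumes "r \<noteq> 0"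
  shows "((\<lambda>r. (lam B r u)^2 / r^2) has_real_derivative 2 * lam B r u * (r * (B^2/2*r*u) - lam B r u) / r^3) (at r)"
  using assms by (auto intro!: derivative_eq_intros simp: field_simps power2_eq_square power3_eq_cube)

definition gm :: "real \<Rightarrow> real" where "gm r = r - 1"
lemma gm_d[derivative_intros]: "(gm has_real_derivative 1) (at r)"
  unfolding gm_def by (auto intro!: derivative_eq_intros)

lemma P2_dr: assumes "1 < r" "0 \<le> u"
  shows "((\<lambda>r. r / ((lam B r u)^2 * (r - 1))) has_real_derivative 
     - (lam B r u + 2 * r * (B^2/2*r*u) * (r - 1)) / ((lam B r u)^3 * (r - 1)^2)) (at r)"
proof -
  have l: "lam B r u \<noteq> 0" using assms lam_pos[of u B r] by simp
  have g: "gm r \<noteq> 0" using assms by (simp add: gm_def)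
  have "((\<lambda>r. r / ((lam B r u)^2 * gm r)) has_real_derivative 
     - (lam B r u + 2 * r * (B^2/2*r*u) * gm r) / ((lam B r u)^3 * (gm r)^2)) (at r)"
    using assms l g apply (auto intro!: derivative_eq_intros simp: field_simps)
    unfolding gm_def by algebra
  then show ?thesis unfolding gm_def .
qed

lemma Q1_du: assumes "u \<noteq> 0"
  shows "((\<lambda>u. (lam B r u)^2 / u) has_real_derivative (2 * lam B r u * (B^2/4*r^2) * u - (lam B r u)^2) / u^2) (at u)"
  using assms by (auto intro!: derivative_eq_intros simp: field_simps power2_eq_square power3_eq_cube)

lemma Q2_du: assumes "0 \<le> u"
  shows "((\<lambda>u. 1 / (lam B r u)^2) has_real_derivative (- 2 * (B^2/4*r^2) / (lam B r u)^3)) (at u)"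
proof -
  have l: "lam B r u \<noteq> 0" using assms lam_pos[of u B r] by simp
  show ?thesis
  using assms l by (auto intro!: derivative_eq_intros simp: field_simps power2_eq_square power3_eq_cube)
qed

lemma W_dr: assumes "1 < r" "0 < u"
  shows "((\<lambda>r. Wf B L E r u) has_real_derivative Wr B L E r u) (at r)"
  unfolding Wf_def Wr_def
  by (intro DERIV_diff DERIV_cmult P1_dr P2_dr) (use assms in auto)

lemma W_du: assumes "1 < r" "0 < u"
  shows "((\<lambda>u. Wf B L E r u) has_real_derivative Wu B L E r u) (at u)"
proof -
  have e: "(\<lambda>u. Wf B L E r u) = (\<lambda>u. L^2 / (2 * r^2) * ((lam B r u)^2 / u) - E^2 * r / (2 * (r - 1)) * (1 / (lam B r u)^2))"
    by (auto simp: Wf_def fun_eq_iff field_simps)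
  show ?thesis unfolding e Wu_def
    by (intro DERIV_diff DERIV_cmult Q1_du Q2_du) (use assms in auto)
qed

definition Ad :: "real \<Rightarrow> real \<Rightarrow> real \<Rightarrow> real" where
  "Ad B r th = deriv (\<lambda>r. Gam r / (2 * (Lam B r th)^2)) r"
definition Cd :: "real \<Rightarrow> real \<Rightarrow> real \<Rightarrow> real" where
  "Cd B r th = deriv (\<lambda>r. 1 / (2 * r^2 * (Lam B r th)^2)) r"

lemma Ad_D: assumes "1 < r" shows "((\<lambda>r. Gam r / (2 * (Lam B r th)^2)) has_real_derivative Ad B r th) (at r)"
proof -
  have "0 < Lam B r th" unfolding Lam_def by (simp add: add_pos_nonneg)
  then have "\<exists>D. ((\<lambda>r. Gam r / (2 * (Lam B r th)^2)) has_real_derivative D) (at r)"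
    using assms unfolding Gam_def Lam_def by (intro exI) (auto intro!: derivative_eq_intros)
  then show ?thesis unfolding Ad_def using DERIV_deriv_iff_has_field_derivative by blast
qed

lemma Cd_D: assumes "1 < r" shows "((\<lambda>r. 1 / (2 * r^2 * (Lam B r th)^2)) has_real_derivative Cd B r th) (at r)"
proof -
  have "0 < Lam B r th" unfolding Lam_def by (simp add: add_pos_nonneg)
  then have "\<exists>D. ((\<lambda>r. 1 / (2 * r^2 * (Lam B r th)^2)) has_real_derivative D) (at r)"
    using assms unfolding Lam_def by (intro exI) (auto intro!: derivative_eq_intros)
  then show ?thesis unfolding Cd_def using DERIV_deriv_iff_has_field_derivative by blast
qed

lemma pd3: assumes "1 < r" "sin th \<noteq> 0"
  shows "pd (Ham B L E) 3 (phase_pt pr pt r th) = pr^2 * Ad B r th + pt^2 * Cd B r th + Wr B L E r ((sin th)^2)"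
proof -
  let ?f = "\<lambda>x. pr^2 * (Gam x / (2 * (Lam B x th)^2)) + pt^2 * (1 / (2 * x^2 * (Lam B x th)^2)) + Wf B L E x ((sin th)^2)"
  have "(?f has_real_derivative pr^2 * Ad B r th + pt^2 * Cd B r th + Wr B L E r ((sin th)^2)) (at r)"
    by (intro DERIV_add DERIV_cmult Ad_D Cd_D W_dr) (use assms in auto)
  then have d: "((\<lambda>t. ?f (t + r)) has_real_derivative pr^2 * Ad B r th + pt^2 * Cd B r th + Wr B L E r ((sin th)^2)) (at 0)"
    using DERIV_shift[of ?f _ 0 r] by simp
  have "((\<lambda>t. Ham B L E (phase_pt pr pt (r+t) th)) has_real_derivative pr^2 * Ad B r th + pt^2 * Cd B r th + Wr B L E r ((sin th)^2)) (at 0)"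
  proof (rule has_field_derivative_transform_within_open[OF d, of "{t. 1 < t + r}"])
    show "open {t. 1 < t + r}" by (auto intro!: open_Collect_less continuous_intros)
    show "0 \<in> {t. 1 < t + r}" using assms by simp
    fix t assume "t \<in> {t. 1 < t + r}"
    then show "?f (t + r) = Ham B L E (phase_pt pr pt (r+t) th)"
      by (simp add: Ham_pp hh_def Veff_W add.commute field_simps)
  qed
  then show ?thesis by (simp add: pd_pp DERIV_imp_deriv)
qed

lemma pd4: assumes "1 < r" "sin th \<noteq> 0"
  shows "pd (Ham B L E) 4 (phase_pt pr pt r th) =
    ((pr^2 * Gam r / 2 + pt^2 / (2 * r^2)) * (- 2 * (B^2/4*r^2) / (lam B r ((sin th)^2))^3) + Wu B L E r ((sin th)^2))
     * (2 * sin th * cos th)"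
proof -
  let ?K = "pr^2 * Gam r / 2 + pt^2 / (2 * r^2)"
  let ?g = "\<lambda>u. ?K * (1 / (lam B r u)^2) + Wf B L E r u"
  have S: "0 < (sin th)^2" using assms by simp
  have d1: "(?g has_real_derivative ?K * (- 2 * (B^2/4*r^2) / (lam B r ((sin th)^2))^3) + Wu B L E r ((sin th)^2)) (at ((sin th)^2))"
    by (intro DERIV_add DERIV_cmult Q2_du W_du) (use assms S in auto)
  have d2: "((\<lambda>t. (sin (th + t))^2) has_real_derivative 2 * sin th * cos th) (at 0)"
    by (auto intro!: derivative_eq_intros)
  have d: "((\<lambda>t. ?g ((sin (th + t))^2)) has_real_derivative
     (?K * (- 2 * (B^2/4*r^2) / (lam B r ((sin th)^2))^3) + Wu B L E r ((sin th)^2)) * (2 * sin th * cos th)) (at 0)"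
    using DERIV_chain2[OF _ d2] d1 by simp
  have lp: "\<And>x. (1 + B^2 * r^2 * (sin x)^2 / 4) \<noteq> 0"
  proof -
    fix x have "0 \<le> B^2 * r^2 * (sin x)^2 / 4" by simp
    then show "(1 + B^2 * r^2 * (sin x)^2 / 4) \<noteq> 0" by linarith
  qed
  have e: "(\<lambda>t. Ham B L E (phase_pt pr pt r (th + t))) = (\<lambda>t. ?g ((sin (th + t))^2))"
    using assms lp by (auto simp: fun_eq_iff Ham_pp hh_def Veff_W Lam_def lam_def field_simps)
  show ?thesis unfolding pd_pp e using d by (simp add: DERIV_imp_deriv)
qed


lemma deriv_shift0: "deriv (\<lambda>t. f (x + t)) 0 = deriv (f::real\<Rightarrow>real) x"
proof -
  have "\<And>D. ((\<lambda>t. f (x + t)) has_real_derivative D) (at 0) \<longleftrightarrow> (f has_real_derivative D) (at x)"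
    using DERIV_shift[of f _ 0 x] by (simp add: add.commute)
  then show ?thesis unfolding deriv_def by simp
qed

lemma ev_small: "eventually (\<lambda>t::real. \<bar>t\<bar> < d) (nhds 0)" if "0 < d"
  using that eventually_nhds_metric[of "\<lambda>t::real. \<bar>t\<bar> < d" 0] by (auto simp: dist_real_def)

lemma sin_pi2_ne: "\<bar>t\<bar> < 1 \<Longrightarrow> sin (pi/2 + t) \<noteq> 0"
proof -
  assume "\<bar>t\<bar> < 1"
  then have "\<bar>t\<bar> < pi/2" using pi_gt3 by linarith
  then have "cos t > 0" by (intro cos_gt_zero_pi) auto
  then show ?thesis by (simp add: sin_add)
qed

lemma lin_deriv: "deriv (\<lambda>t. c * t) 0 = (c::real)"
  by (rule DERIV_imp_deriv) (auto intro!: derivative_eq_intros)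

abbreviation z0 :: "real \<Rightarrow> real^4" where "z0 rc \<equiv> phase_pt 0 0 rc (pi/2)"

lemma h11: "pd (pd (Ham B L E) 1) 1 (z0 rc) = Gam rc / (Lam B rc (pi/2))^2"
proof -
  have "pd (pd (Ham B L E) 1) 1 (z0 rc) = deriv (\<lambda>t. Gam rc / (Lam B rc (pi/2))^2 * t) 0"
    unfolding pd_pp(1)[of "pd (Ham B L E) 1"] by (simp add: pd1)
  also have "\<dots> = Gam rc / (Lam B rc (pi/2))^2"
    by (rule lin_deriv)
  finally show ?thesis .
qed

lemma h1j: "pd (pd (Ham B L E) 1) 2 (z0 rc) = 0" "pd (pd (Ham B L E) 1) 3 (z0 rc) = 0"
  "pd (pd (Ham B L E) 1) 4 (z0 rc) = 0"
  unfolding pd_pp(2)[of "pd (Ham B L E) 1"] pd_pp(3)[of "pd (Ham B L E) 1"] pd_pp(4)[of "pd (Ham B L E) 1"]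
  by (simp_all add: pd1)

lemma h22: "pd (pd (Ham B L E) 2) 2 (z0 rc) = 1 / (rc^2 * (Lam B rc (pi/2))^2)"
proof -
  have "pd (pd (Ham B L E) 2) 2 (z0 rc) = deriv (\<lambda>t. 1 / (rc^2 * (Lam B rc (pi/2))^2) * t) 0"
    unfolding pd_pp(2)[of "pd (Ham B L E) 2"] by (simp add: pd2)
  also have "\<dots> = 1 / (rc^2 * (Lam B rc (pi/2))^2)"
    by (rule lin_deriv)
  finally show ?thesis .
qed

lemma h2j: "pd (pd (Ham B L E) 2) 1 (z0 rc) = 0" "pd (pd (Ham B L E) 2) 3 (z0 rc) = 0"
  "pd (pd (Ham B L E) 2) 4 (z0 rc) = 0"
  unfolding pd_pp(1)[of "pd (Ham B L E) 2"] pd_pp(3)[of "pd (Ham B L E) 2"] pd_pp(4)[of "pd (Ham B L E) 2"]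
  by (simp_all add: pd2)

lemma h31: assumes "1 < rc" shows "pd (pd (Ham B L E) 3) 1 (z0 rc) = 0"
proof -
  have "pd (pd (Ham B L E) 3) 1 (z0 rc) = deriv (\<lambda>t. Ad B rc (pi/2) * (0 + t)^2 + Wr B L E rc 1) 0"
    using assms unfolding pd_pp(1)[of "pd (Ham B L E) 3"] pd_pp(2)[of "pd (Ham B L E) 3"] by (simp add: pd3 mult.commute)
  also have "\<dots> = 0" by (subst quad_deriv) simp
  finally show ?thesis .
qed

lemma h32: assumes "1 < rc" shows "pd (pd (Ham B L E) 3) 2 (z0 rc) = 0"
proof -
  have "pd (pd (Ham B L E) 3) 2 (z0 rc) = deriv (\<lambda>t. Cd B rc (pi/2) * (0 + t)^2 + Wr B L E rc 1) 0"
    using assms unfolding pd_pp(1)[of "pd (Ham B L E) 3"] pd_pp(2)[of "pd (Ham B L E) 3"] by (simp add: pd3 mult.commute)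
  also have "\<dots> = 0" by (subst quad_deriv) simp
  finally show ?thesis .
qed

lemma h33: assumes "1 < rc" shows "pd (pd (Ham B L E) 3) 3 (z0 rc) = deriv (\<lambda>r. Wr B L E r 1) rc"
proof -
  have "pd (pd (Ham B L E) 3) 3 (z0 rc) = deriv (\<lambda>t. pd (Ham B L E) 3 (phase_pt 0 0 (rc + t) (pi/2))) 0"
    by (rule pd_pp(3))
  also have "\<dots> = deriv (\<lambda>t. Wr B L E (rc + t) 1) 0"
  proof (rule deriv_cong_ev)
    have "eventually (\<lambda>t::real. \<bar>t\<bar> < rc - 1) (nhds 0)" using assms by (intro ev_small) simp
    then show "\<forall>\<^sub>F t in nhds 0. pd (Ham B L E) 3 (phase_pt 0 0 (rc + t) (pi / 2)) = Wr B L E (rc + t) 1"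
      by eventually_elim (subst pd3, auto)
  qed simp
  also have "\<dots> = deriv (\<lambda>r. Wr B L E r 1) rc" by (rule deriv_shift0)
  finally show ?thesis .
qed

lemma Wr_du_ex: assumes "1 < r" "0 < u" shows "\<exists>D. ((\<lambda>u. Wr B L E r u) has_real_derivative D) (at u)"
proof -
  have "lam B r u \<noteq> 0" using assms lam_pos[of u B r] by simp
  then show ?thesis using assms unfolding Wr_def by (intro exI) (auto intro!: derivative_eq_intros)
qed

lemma Wu_du_ex: assumes "1 < r" "0 < u" shows "\<exists>D. ((\<lambda>u. Wu B L E r u) has_real_derivative D) (at u)"
proof -
  have "lam B r u \<noteq> 0" using assms lam_pos[of u B r] by simp
  then show ?thesis using assms unfolding Wu_def by (intro exI) (auto intro!: derivative_eq_intros)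
qed

lemma h34: assumes "1 < rc" shows "pd (pd (Ham B L E) 3) 4 (z0 rc) = 0"
proof -
  have "pd (pd (Ham B L E) 3) 4 (z0 rc) = deriv (\<lambda>t. pd (Ham B L E) 3 (phase_pt 0 0 rc (pi/2 + t))) 0"
    by (rule pd_pp(4))
  also have "\<dots> = deriv (\<lambda>t. Wr B L E rc ((sin (pi/2 + t))^2)) 0"
  proof (rule deriv_cong_ev)
    have "eventually (\<lambda>t::real. \<bar>t\<bar> < 1) (nhds 0)" by (intro ev_small) simp
    then show "\<forall>\<^sub>F t in nhds 0. pd (Ham B L E) 3 (phase_pt 0 0 rc (pi/2 + t)) = Wr B L E rc ((sin (pi/2 + t))^2)"
      by eventually_elim (subst pd3, use assms sin_pi2_ne in auto)
  qed simp
  also have "\<dots> = 0"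
  proof -
    obtain D where D: "((\<lambda>u. Wr B L E rc u) has_real_derivative D) (at ((sin (pi/2 + 0))^2))"
      using Wr_du_ex[of rc 1 B L E] assms by auto
    have d2: "((\<lambda>t. (sin (pi/2 + t))^2) has_real_derivative 2 * sin (pi/2) * cos (pi/2)) (at 0)"
      by (auto intro!: derivative_eq_intros)
    have "((\<lambda>t. Wr B L E rc ((sin (pi/2 + t))^2)) has_real_derivative D * (2 * sin (pi/2) * cos (pi/2))) (at 0)"
      using DERIV_chain2[OF D d2] by simp
    then show ?thesis by (simp add: DERIV_imp_deriv)
  qed
  finally show ?thesis .
qed

lemma h4j: assumes "1 < rc" shows "pd (pd (Ham B L E) 4) 1 (z0 rc) = 0" "pd (pd (Ham B L E) 4) 2 (z0 rc) = 0"
  using assms unfolding pd_pp(1)[of "pd (Ham B L E) 4"] pd_pp(2)[of "pd (Ham B L E) 4"] by (simp_all add: pd4)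

lemma h43: assumes "1 < rc" shows "pd (pd (Ham B L E) 4) 3 (z0 rc) = 0"
proof -
  have "pd (pd (Ham B L E) 4) 3 (z0 rc) = deriv (\<lambda>t. pd (Ham B L E) 4 (phase_pt 0 0 (rc + t) (pi/2))) 0"
    by (rule pd_pp(3))
  also have "\<dots> = deriv (\<lambda>t. 0) 0"
  proof (rule deriv_cong_ev)
    have "eventually (\<lambda>t::real. \<bar>t\<bar> < rc - 1) (nhds 0)" using assms by (intro ev_small) simp
    then show "\<forall>\<^sub>F t in nhds 0. pd (Ham B L E) 4 (phase_pt 0 0 (rc + t) (pi / 2)) = 0"
      by eventually_elim (subst pd4, auto)
  qed simp
  finally show ?thesis by simp
qed

lemma h44: assumes "1 < rc" shows "pd (pd (Ham B L E) 4) 4 (z0 rc) = - 2 * Wu B L E rc 1"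
proof -
  have "pd (pd (Ham B L E) 4) 4 (z0 rc) = deriv (\<lambda>t. pd (Ham B L E) 4 (phase_pt 0 0 rc (pi/2 + t))) 0"
    by (rule pd_pp(4))
  also have "\<dots> = deriv (\<lambda>t. Wu B L E rc ((sin (pi/2 + t))^2) * (2 * sin (pi/2 + t) * cos (pi/2 + t))) 0"
  proof (rule deriv_cong_ev)
    have "eventually (\<lambda>t::real. \<bar>t\<bar> < 1) (nhds 0)" by (intro ev_small) simp
    then show "\<forall>\<^sub>F t in nhds 0. pd (Ham B L E) 4 (phase_pt 0 0 rc (pi/2 + t)) =
       Wu B L E rc ((sin (pi/2 + t))^2) * (2 * sin (pi/2 + t) * cos (pi/2 + t))"
      by eventually_elim (subst pd4, use assms sin_pi2_ne in auto)
  qed simp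
  also have "\<dots> = - 2 * Wu B L E rc 1"
  proof -
    obtain D where D: "((\<lambda>u. Wu B L E rc u) has_real_derivative D) (at ((sin (pi/2 + 0))^2))"
      using Wu_du_ex[of rc 1 B L E] assms by auto
    have d2: "((\<lambda>t. (sin (pi/2 + t))^2) has_real_derivative 2 * sin (pi/2) * cos (pi/2)) (at 0)"
      by (auto intro!: derivative_eq_intros)
    have d3: "((\<lambda>t. Wu B L E rc ((sin (pi/2 + t))^2)) has_real_derivative D * (2 * sin (pi/2) * cos (pi/2))) (at 0)"
      using DERIV_chain2[OF D d2] by simp
    have d4: "((\<lambda>t. 2 * sin (pi/2 + t) * cos (pi/2 + t)) has_real_derivative 
        2 * cos (pi/2) * cos (pi/2) - 2 * sin (pi/2) * sin (pi/2)) (at 0)"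
      by (auto intro!: derivative_eq_intros)
    have "((\<lambda>t. Wu B L E rc ((sin (pi/2 + t))^2) * (2 * sin (pi/2 + t) * cos (pi/2 + t))) has_real_derivative
       - 2 * Wu B L E rc 1) (at 0)"
      using DERIV_mult[OF d3 d4] by simp
    then show ?thesis by (simp add: DERIV_imp_deriv)
  qed
  finally show ?thesis .
qed


lemma sign_tc[simp]: "permutation q \<Longrightarrow> sign (Transposition.transpose a b \<circ> q) = (if a = b then 1 else -1) * sign q"
  by (simp add: sign_compose permutation_swap_id sign_swap_id)
lemma perm_tc[simp]: "permutation q \<Longrightarrow> permutation (Transposition.transpose a b \<circ> q)"
  by (simp add: permutation_compose permutation_swap_id)
lemma det4:
  "det (A::'a::comm_ring_1^4^4) = 
  (let a = (\<lambda>i j. A$i$j) in 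
   a 1 1 * a 2 2 * a 3 3 * a 4 4 - a 1 1 * a 2 2 * a 3 4 * a 4 3 - a 1 1 * a 2 3 * a 3 2 * a 4 4
   + a 1 1 * a 2 3 * a 3 4 * a 4 2 + a 1 1 * a 2 4 * a 3 2 * a 4 3 - a 1 1 * a 2 4 * a 3 3 * a 4 2
   - a 1 2 * a 2 1 * a 3 3 * a 4 4 + a 1 2 * a 2 1 * a 3 4 * a 4 3 + a 1 2 * a 2 3 * a 3 1 * a 4 4
   - a 1 2 * a 2 3 * a 3 4 * a 4 1 - a 1 2 * a 2 4 * a 3 1 * a 4 3 + a 1 2 * a 2 4 * a 3 3 * a 4 1
   + a 1 3 * a 2 1 * a 3 2 * a 4 4 - a 1 3 * a 2 1 * a 3 4 * a 4 2 - a 1 3 * a 2 2 * a 3 1 * a 4 4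
   + a 1 3 * a 2 2 * a 3 4 * a 4 1 + a 1 3 * a 2 4 * a 3 1 * a 4 2 - a 1 3 * a 2 4 * a 3 2 * a 4 1
   - a 1 4 * a 2 1 * a 3 2 * a 4 3 + a 1 4 * a 2 1 * a 3 3 * a 4 2 + a 1 4 * a 2 2 * a 3 1 * a 4 3
   - a 1 4 * a 2 2 * a 3 3 * a 4 1 - a 1 4 * a 2 3 * a 3 1 * a 4 2 + a 1 4 * a 2 3 * a 3 2 * a 4 1)"
proof -
  have f1: "finite {2::4, 3, 4}" "1 \<notin> {2::4, 3, 4}" by auto
  have f2: "finite {3::4, 4}" "2 \<notin> {3::4, 4}" by auto
  have f3: "finite {4::4}" "3 \<notin> {4::4}" by auto
  show ?thesis
    unfolding det_def UNIV_4
    unfolding sum_over_permutations_insert[OF f1]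
    unfolding sum_over_permutations_insert[OF f2]
    unfolding sum_over_permutations_insert[OF f3]
    unfolding permutes_sing
    by (simp add: sign_swap_id permutation_swap_id sign_compose sign_id swap_id_eq algebra_simps Let_def)
qed

definition Mx :: "real \<Rightarrow> real \<Rightarrow> real \<Rightarrow> real \<Rightarrow> real^4^4" where
  "Mx p h a c = (\<chi> i j. if i = 1 \<and> j = 3 then - p else if i = 2 \<and> j = 4 then - h
       else if i = 3 \<and> j = 1 then a else if i = 4 \<and> j = 2 then c else 0)"

lemma spec_Mx: "spec4 (Mx p h a c) = {\<mu>. (\<mu>^2 + complex_of_real (a * p)) * (\<mu>^2 + complex_of_real (c * h)) = 0}"
  unfolding spec4_def
  by (simp add: det4 Mx_def Let_def algebra_simps power2_eq_square)

lemma sq_roots: fixes w :: real assumes "0 < w"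
  shows "{\<mu>::complex. \<mu>^2 + complex_of_real (-(w^2)) = 0} = {complex_of_real w, - complex_of_real w}"
    and "{\<mu>::complex. \<mu>^2 + complex_of_real (w^2) = 0} = {\<i> * complex_of_real w, - \<i> * complex_of_real w}"
proof -
  have "\<And>\<mu>. \<mu>^2 + complex_of_real (-(w^2)) = (\<mu> - w) * (\<mu> + w)"
    by (simp add: algebra_simps power2_eq_square)
  then show "{\<mu>::complex. \<mu>^2 + complex_of_real (-(w^2)) = 0} = {complex_of_real w, - complex_of_real w}"
    by (auto simp: eq_neg_iff_add_eq_0)
  have "\<And>\<mu>. \<mu>^2 + complex_of_real (w^2) = (\<mu> - \<i> * w) * (\<mu> + \<i> * w)"
    by (simp add: algebra_simps power2_eq_square)
  then show "{\<mu>::complex. \<mu>^2 + complex_of_real (w^2) = 0} = {\<i> * complex_of_real w, - \<i> * complex_of_real w}"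
    by (auto simp: eq_neg_iff_add_eq_0)
qed

lemma prod_set: "{\<mu>::complex. f \<mu> * g \<mu> = (0::complex)} = {\<mu>. f \<mu> = 0} \<union> {\<mu>. g \<mu> = 0}"
  by auto

lemma Mx_saddle: assumes "a * p < 0" "0 < c * h"
  shows "saddle_center (Mx p h a c) \<and> lin_unstable (Mx p h a c)"
proof -
  define l where "l = sqrt (- (a * p))"
  define w where "w = sqrt (c * h)"
  have l: "0 < l" "a * p = - (l^2)" using assms by (auto simp: l_def)
  have w: "0 < w" "c * h = w^2" using assms by (auto simp: w_def)
  have S: "spec4 (Mx p h a c) = {complex_of_real l, - complex_of_real l, \<i> * complex_of_real w, - \<i> * complex_of_real w}"
    unfolding spec_Mx prod_set l(2) w(2) sq_roots[OF l(1)] sq_roots[OF w(1)] by auto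
  show ?thesis unfolding saddle_center_def lin_unstable_def S using l w by auto
qed

lemma Mx_center: assumes "0 < a * p" "0 < c * h"
  shows "center_center (Mx p h a c)"
proof -
  define l where "l = sqrt (a * p)"
  define w where "w = sqrt (c * h)"
  have l: "0 < l" "a * p = l^2" using assms by (auto simp: l_def)
  have w: "0 < w" "c * h = w^2" using assms by (auto simp: w_def)
  have S: "spec4 (Mx p h a c) = {\<i> * complex_of_real l, - \<i> * complex_of_real l, \<i> * complex_of_real w, - \<i> * complex_of_real w}"
    unfolding spec_Mx prod_set l(2) w(2) sq_roots[OF l(1)] sq_roots[OF w(1)] by auto
  show ?thesis unfolding center_center_def S using l w by auto
qed

lemma linHam_z0: assumes "1 < rc"
  shows "linHam B L E (z0 rc) = Mx (deriv (\<lambda>r. Wr B L E r 1) rc) (- 2 * Wu B L E rc 1)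
            (Gam rc / (Lam B rc (pi/2))^2) (1 / (rc^2 * (Lam B rc (pi/2))^2))"
  using assms
  by (simp add: linHam_def Mx_def vec_eq_iff forall_4 sum_4 Jmat_def h11 h1j h22 h2j h31 h32 h33 h34 h4j h43 h44)

lemma HamVF_z0: assumes "1 < rc"
  shows "HamVF B L E (z0 rc) = 0 \<longleftrightarrow> Wr B L E rc 1 = 0"
  using assms
  by (simp add: HamVF_def vec_eq_iff forall_4 sum_4 Jmat_def pd1 pd2 pd3 pd4)


lemma Wr1: assumes "1 < r"
  shows "Wr B L E r 1 = L^2 * (bf B r * (2 * (B^2 * r^2 / 4) - bf B r)) / r^3
     + E^2 * (bf B r + 4 * (B^2 * r^2 / 4) * (r - 1)) / (2 * (bf B r)^3 * (r - 1)^2)"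
proof -
  have l: "lam B r 1 = bf B r" unfolding lam_def bf_def by simp
  have a: "r * (B^2/2*r*1) = 2 * (B^2 * r^2 / 4)" by (simp add: power2_eq_square)
  have c: "2 * r * (B^2/2*r*1) * (r - 1) = 4 * (B^2 * r^2 / 4) * (r - 1)" by (simp add: power2_eq_square)
  have "Wr B L E r 1 = L^2 / (2*1) * (2 * bf B r * (2 * (B^2 * r^2 / 4) - bf B r) / r^3)
     - E^2 / 2 * (- (bf B r + 4 * (B^2 * r^2 / 4) * (r - 1)) / ((bf B r)^3 * (r - 1)^2))"
    unfolding Wr_def l a c ..
  also have "\<dots> = L^2 * (bf B r * (2 * (B^2 * r^2 / 4) - bf B r)) / r^3
     + E^2 * (bf B r + 4 * (B^2 * r^2 / 4) * (r - 1)) / (2 * (bf B r)^3 * (r - 1)^2)"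
    by (simp add: divide_simps) (auto simp: algebra_simps)
  finally show ?thesis .
qed

lemma alg_Wr0:
  fixes q b r Z P m :: real
  assumes "2 * q - b = q - 1" "r \<noteq> 0" "m \<noteq> 0" "b \<noteq> 0" "Z \<noteq> 0" 
  shows "(r^2 / b^2 * (P / Z)) * (b * (2 * q - b)) / r^3
     + (b^2 * m^2 * ((4 - 4 * q) / (2 * r * Z))) * P / (2 * b^3 * m^2) = 0"
proof -
  have "(r^2 / b^2 * (P / Z)) * (b * (2 * q - b)) / r^3 = P * (q - 1) / (b * r * Z)"
    unfolding assms(1) using assms(2-) by (simp add: field_simps power2_eq_square power3_eq_cube)
  moreover have "(b^2 * m^2 * ((4 - 4 * q) / (2 * r * Z))) * P / (2 * b^3 * m^2) = P * (1 - q) / (b * r * Z)"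
    using assms(2-) by (simp add: field_simps power2_eq_square power3_eq_cube)
  ultimately show ?thesis by (simp add: add_divide_distrib[symmetric] algebra_simps)
qed


lemma alg_Wf:
  fixes q b r Z P m :: real
  assumes "r \<noteq> 0" "m \<noteq> 0" "b \<noteq> 0" "Z \<noteq> 0" "m = r - 1" "b = 1 + q" "P = 4 * (b - 1) * m + b"
    "Z = 2 * r - 3 - q * (6 * r - 5)"
  shows "(r^2 / b^2 * (P / Z)) / (2 * 1) * (b^2 / r^2) - (b^2 * m^2 * ((4 - 4 * q) / (2 * r * Z))) / 2 * (r / (b^2 * m)) = - 1 / 2"
proof -
  have "(r^2 / b^2 * (P / Z)) / (2 * 1) * (b^2 / r^2) = P / (2 * Z)"
    using assms(1-4) by (simp add: field_simps power2_eq_square)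
  moreover have "(b^2 * m^2 * ((4 - 4 * q) / (2 * r * Z))) / 2 * (r / (b^2 * m)) = m * (4 - 4 * q) / (4 * Z)"
    using assms(1-4) by (simp add: field_simps power2_eq_square)
  moreover have "P / (2 * Z) - m * (4 - 4 * q) / (4 * Z) = (2 * P - m * (4 - 4 * q)) / (4 * Z)"
    using assms(4) by (simp add: field_simps)
  moreover have "2 * P - m * (4 - 4 * q) = - 2 * Z"
    unfolding assms(5-8) by (simp add: algebra_simps)
  ultimately show ?thesis using assms(4) by simp
qed

lemma alg_Wu:
  fixes q b r Z P m :: real
  assumes "r \<noteq> 0" "m \<noteq> 0" "b \<noteq> 0" "Z \<noteq> 0" "b = 1 + q" "P = 4 * (b - 1) * m + b"
  shows "(r^2 / b^2 * (P / Z)) / (2 * r^2) * ((2 * b * q * 1 - b^2) / 1^2)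
     - (b^2 * m^2 * ((4 - 4 * q) / (2 * r * Z))) * r / (2 * m) * (- 2 * q / b^3) = - (1 - q) / (2 * Z)"
proof -
  have "(r^2 / b^2 * (P / Z)) / (2 * r^2) * ((2 * b * q * 1 - b^2) / 1^2) = P * (2 * q - b) / (2 * b * Z)"
    using assms(1-4) by (simp add: field_simps power2_eq_square)
  moreover have "(b^2 * m^2 * ((4 - 4 * q) / (2 * r * Z))) * r / (2 * m) * (- 2 * q / b^3) = - (m * (4 - 4 * q) * q / (2 * b * Z))"
    using assms(1-4) by (simp add: field_simps power2_eq_square power3_eq_cube)
  moreover have "P * (2 * q - b) / (2 * b * Z) - - (m * (4 - 4 * q) * q / (2 * b * Z)) = (P * (2 * q - b) + m * (4 - 4 * q) * q) / (2 * b * Z)"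
    using assms(3,4) by (simp add: field_simps)
  moreover have "P * (2 * q - b) + m * (4 - 4 * q) * q = - (1 - q) * b"
    unfolding assms(5,6) by (simp add: algebra_simps)
  ultimately show ?thesis using assms(3,4) by simp
qed

context
  fixes B rc :: real
  assumes rc1: "1 < rc" and Zp: "0 < Zf B rc"
begin

lemma rc32: "3/2 < rc"
proof -
  have "0 \<le> B^2 * rc^2 * (3/2 * rc - 5/4)" using rc1 by simp
  then show ?thesis using Zp unfolding Zf_def by linarith
qed

lemma Bsmall: "B^2 * rc^2 < 4/3"
proof -
  have k: "0 < 3/2 * rc - 5/4" using rc1 by simp
  have "B^2 * rc^2 * (3/2 * rc - 5/4) < 2 * rc - 3" using Zp unfolding Zf_def by linarith
  also have "\<dots> < 4/3 * (3/2 * rc - 5/4)" by simp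
  finally have "B^2 * rc^2 * (3/2 * rc - 5/4) < 4/3 * (3/2 * rc - 5/4)" .
  then show ?thesis using mult_less_cancel_right_pos[OF k] by blast
qed

lemma b_pos: "0 < bf B rc" unfolding bf_def by (simp add: add_pos_nonneg)

lemma Lc_sq: "(Lc B rc)^2 = rc^2 / (bf B rc)^2 * ((4 * (bf B rc - 1) * (rc - 1) + bf B rc) / Zf B rc)"
proof -
  have "0 \<le> (4 * (bf B rc - 1) * (rc - 1) + bf B rc) / Zf B rc"
    using Zp rc1 b_pos unfolding bf_def by (intro divide_nonneg_pos add_nonneg_nonneg) auto
  then show ?thesis unfolding Lc_def by (simp add: power_mult_distrib power_divide)
qed

lemma Ec_sq: "(Ec B rc)^2 = (bf B rc)^2 * (rc - 1)^2 * ((4 - 4 * (B^2 * rc^2 / 4)) / (2 * rc * Zf B rc))"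
proof -
  have "0 \<le> (4 - B^2 * rc^2) / (2 * rc * Zf B rc)"
    using Zp rc1 Bsmall by (intro divide_nonneg_pos) auto
  then show ?thesis unfolding Ec_def by (simp add: power_mult_distrib)
qed

lemma Wr_zero: "Wr B (Lc B rc) (Ec B rc) rc 1 = 0"
proof -
  have e1: "bf B rc + 4 * (B^2 * rc^2 / 4) * (rc - 1) = 4 * (bf B rc - 1) * (rc - 1) + bf B rc"
    by (simp add: bf_def)
  have e3: "2 * (B^2 * rc^2 / 4) - bf B rc = (B^2 * rc^2 / 4) - 1" by (simp add: bf_def)
  show ?thesis unfolding Wr1[OF rc1] Lc_sq Ec_sq e1
    by (rule alg_Wr0) (use rc1 Zp b_pos e3 in auto)
qed

lemma Zq: "Zf B rc = 2 * rc - 3 - (B^2 * rc^2 / 4) * (6 * rc - 5)"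
  unfolding Zf_def by (simp add: field_simps)

lemma Wf_val: "Wf B (Lc B rc) (Ec B rc) rc 1 = - 1 / 2"
proof -
  have l: "lam B rc 1 = bf B rc" unfolding lam_def bf_def by simp
  show ?thesis unfolding Wf_def l Lc_sq Ec_sq
    by (rule alg_Wf[where q = "B^2 * rc^2 / 4"]) (use rc1 Zp b_pos Zq in \<open>auto simp: bf_def\<close>)
qed

lemma Wu_val: "Wu B (Lc B rc) (Ec B rc) rc 1 = - (1 - B^2 * rc^2 / 4) / (2 * Zf B rc)"
proof -
  have l: "lam B rc 1 = bf B rc" unfolding lam_def bf_def by simp
  have e: "B^2/4*rc^2 = B^2 * rc^2 / 4" by simp
  show ?thesis unfolding Wu_def l Lc_sq Ec_sq e
    by (rule alg_Wu) (use rc1 Zp b_pos in \<open>auto simp: bf_def\<close>)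
qed

end


definition Mq :: "real \<Rightarrow> real \<Rightarrow> real" where
  "Mq q r = (r - 3) + q * (16 * r^2 - 39 * r + 21) - q^2 * (24 * r^2 - 51 * r + 25) + q^3 * (24 * r^2 - 37 * r + 15)"

lemma Nf_Mq: "Nf B r = 64 * Mq (B^2 * r^2 / 4) r"
  unfolding Nf_def Mq_def by (simp add: eval_nat_numeral field_simps)

lemma alg_Wrr:
  fixes q b r Z P m :: real
  assumes "r \<noteq> 0" "m \<noteq> 0" "b \<noteq> 0" "Z \<noteq> 0" "m = r - 1" "b = 1 + q" "P = 4 * (b - 1) * m + b"
  shows "(r^2 / b^2 * (P / Z)) * ((q^2 + 3) / r^4)
     + (b^2 * m^2 * ((4 - 4 * q) / (2 * r * Z))) * ((6 * q * (2 * r - 1) * b * m - P * (6 * q * m + 2 * r * b)) / (2 * r * b^4 * m^3))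
     = 64 * Mq q r / (64 * b^2 * r^2 * m * Z)"
proof -
  define X where "X = 6 * q * (2 * r - 1) * b * m - P * (6 * q * m + 2 * r * b)"
  have "(r^2 / b^2 * (P / Z)) * ((q^2 + 3) / r^4) = P * (q^2 + 3) * m / (b^2 * r^2 * m * Z)"
    using assms(1-4) by (simp add: field_simps power2_eq_square power4_eq_xxxx)
  moreover have "(b^2 * m^2 * ((4 - 4 * q) / (2 * r * Z))) * (X / (2 * r * b^4 * m^3)) = (1 - q) * X / (b^2 * r^2 * m * Z)"
    using assms(1-4) by (simp add: field_simps power2_eq_square power3_eq_cube power4_eq_xxxx)
  moreover have "P * (q^2 + 3) * m / (b^2 * r^2 * m * Z) + (1 - q) * X / (b^2 * r^2 * m * Z) = (P * (q^2 + 3) * m + (1 - q) * X) / (b^2 * r^2 * m * Z)"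
    by (simp add: add_divide_distrib)
  moreover have "P * (q^2 + 3) * m + (1 - q) * X = Mq q r"
    unfolding X_def Mq_def assms(5-7) by (simp add: algebra_simps power2_eq_square power3_eq_cube)
  moreover have "64 * Mq q r / (64 * b^2 * r^2 * m * Z) = Mq q r / (b^2 * r^2 * m * Z)" by simp
  ultimately show ?thesis unfolding X_def by simp
qed

definition F1 :: "real \<Rightarrow> real \<Rightarrow> real" where
  "F1 B r = bf B r * (2 * (B^2 * r^2 / 4) - bf B r) / r^3"
definition F2 :: "real \<Rightarrow> real \<Rightarrow> real" where
  "F2 B r = (bf B r + 4 * (B^2 * r^2 / 4) * (r - 1)) / (2 * (bf B r)^3 * (r - 1)^2)"
definition F1d :: "real \<Rightarrow> real \<Rightarrow> real" where
  "F1d B r = ((B^2 * r^2 / 4)^2 + 3) / r^4"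
definition F2d :: "real \<Rightarrow> real \<Rightarrow> real" where
  "F2d B r = (6 * (B^2 * r^2 / 4) * (2 * r - 1) * bf B r * (r - 1)
     - (4 * (bf B r - 1) * (r - 1) + bf B r) * (6 * (B^2 * r^2 / 4) * (r - 1) + 2 * r * bf B r))
     / (2 * r * (bf B r)^4 * (r - 1)^3)"

lemma Wr1F: "1 < r \<Longrightarrow> Wr B L E r 1 = L^2 * F1 B r + E^2 * F2 B r"
  unfolding Wr1 F1_def F2_def by simp

lemma F1_D: assumes "r \<noteq> 0" shows "(F1 B has_real_derivative F1d B r) (at r)"
proof -
  have "((\<lambda>r. (1 + B^2 * r^2 / 4) * (2 * (B^2 * r^2 / 4) - (1 + B^2 * r^2 / 4)) / r^3) has_real_derivative F1d B r) (at r)"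
    using assms unfolding F1d_def
    by (auto intro!: derivative_eq_intros simp: field_simps eval_nat_numeral)
  then show ?thesis unfolding F1_def bf_def by simp
qed

lemma bf_D[derivative_intros]: "((\<lambda>r. bf B r) has_real_derivative B^2 * r / 2) (at r)"
  unfolding bf_def by (auto intro!: derivative_eq_intros)

lemma F2_D: assumes "1 < r" shows "(F2 B has_real_derivative F2d B r) (at r)"
proof -
  have b: "bf B r \<noteq> 0" unfolding bf_def by (metis add_pos_nonneg zero_le_divide_iff zero_le_mult_iff zero_le_numeral zero_le_power2 zero_less_one order_less_irrefl)
  have g: "gm r \<noteq> 0" "r \<noteq> 0" using assms by (auto simp: gm_def)
  have "((\<lambda>r. (bf B r + 4 * (B^2 * r^2 / 4) * gm r) / (2 * (bf B r)^3 * (gm r)^2)) has_real_derivative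
     (6 * (B^2 * r^2 / 4) * (2 * r - 1) * bf B r * gm r
     - (4 * (bf B r - 1) * gm r + bf B r) * (6 * (B^2 * r^2 / 4) * gm r + 2 * r * bf B r))
     / (2 * r * (bf B r)^4 * (gm r)^3)) (at r)"
    using b g apply (auto intro!: derivative_eq_intros simp: field_simps)
    unfolding gm_def bf_def by algebra
  then show ?thesis unfolding F2_def F2d_def gm_def .
qed

lemma Wrr_val: assumes rc1: "1 < rc" and Zp: "0 < Zf B rc"
  shows "deriv (\<lambda>r. Wr B (Lc B rc) (Ec B rc) r 1) rc = Nf B rc / (64 * (bf B rc)^2 * rc^2 * (rc - 1) * Zf B rc)"
proof -
  let ?L = "Lc B rc" and ?E = "Ec B rc"
  have "deriv (\<lambda>r. Wr B ?L ?E r 1) rc = deriv (\<lambda>r. ?L^2 * F1 B r + ?E^2 * F2 B r) rc"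
  proof (rule deriv_cong_ev)
    have "eventually (\<lambda>r. r \<in> {1<..}) (nhds rc)"
      using rc1 by (intro eventually_nhds_in_open) auto
    then show "\<forall>\<^sub>F r in nhds rc. Wr B ?L ?E r 1 = ?L^2 * F1 B r + ?E^2 * F2 B r"
      by eventually_elim (simp add: Wr1F)
  qed simp
  also have "\<dots> = ?L^2 * F1d B rc + ?E^2 * F2d B rc"
    by (rule DERIV_imp_deriv) (intro DERIV_add DERIV_cmult F1_D F2_D, use rc1 in auto)
  also have "\<dots> = Nf B rc / (64 * (bf B rc)^2 * rc^2 * (rc - 1) * Zf B rc)"
    unfolding Lc_sq[OF rc1 Zp] Ec_sq[OF rc1 Zp] F1d_def F2d_def Nf_Mq
    by (rule alg_Wrr) (use rc1 Zp b_pos[of rc B] in \<open>auto simp: bf_def\<close>)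
  finally show ?thesis .
qed


lemma aux_m: "(m::real) \<noteq> 0 \<Longrightarrow> l \<noteq> 0 \<Longrightarrow> - (E2 * r / (2 * m) * (- 2 * k / l)) = E2 * r * k / (m * l)"
  by (simp add: field_simps)

definition Phi :: "real \<Rightarrow> real \<Rightarrow> real \<Rightarrow> real \<Rightarrow> real \<Rightarrow> real" where
  "Phi B L E r v = L^2 / (2 * r^2) * ((B^2 * r^2 / 4)^2 - 1) + E^2 * r * (B^2 * r^2 / 4) / ((r - 1) * (1 + (B^2 * r^2 / 4) * v)^3)"

lemma Wu_bound: assumes "1 < r" "0 < v" "v \<le> x" "x \<le> 1"
  shows "Wu B L E r x \<le> Phi B L E r v"
proof -
  define k where "k = B^2 * r^2 / 4"
  have k0: "0 \<le> k" unfolding k_def by simp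
  have e: "B^2/4*r^2 = k" unfolding k_def by simp
  have lx: "lam B r x = 1 + k * x" unfolding lam_def k_def by simp
  have x0: "0 < x" using assms by simp
  have p1: "(2 * (1 + k * x) * k * x - (1 + k * x)^2) / x^2 = k^2 - 1 / x^2"
    using x0 by (simp add: field_simps power2_eq_square)
  have "1 \<le> 1 / x^2" using x0 assms(4) by (simp add: field_simps power_le_one)
  then have p1': "(2 * (1 + k * x) * k * x - (1 + k * x)^2) / x^2 \<le> k^2 - 1"
    unfolding p1 by simp
  have A: "L^2 / (2 * r^2) * ((2 * (1 + k * x) * k * x - (1 + k * x)^2) / x^2) \<le> L^2 / (2 * r^2) * (k^2 - 1)"
    by (rule mult_left_mono[OF p1']) simp
  have lv: "0 < 1 + k * v" using k0 assms by (simp add: add_pos_nonneg)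
  have "1 + k * v \<le> 1 + k * x" using k0 assms by (simp add: mult_left_mono)
  then have "(1 + k * v)^3 \<le> (1 + k * x)^3" using lv by (intro power_mono) auto
  moreover have "0 < (1 + k * x)^3 * (1 + k * v)^3"
    using lv \<open>1 + k * v \<le> 1 + k * x\<close> by (intro mult_pos_pos zero_less_power) auto
  ultimately have inv: "1 / (1 + k * x)^3 \<le> 1 / (1 + k * v)^3"
    using divide_left_mono[of "(1 + k * v)^3" "(1 + k * x)^3" 1] by simp
  have c0: "0 \<le> E^2 * r * k / (r - 1)" using assms k0 by simp
  have "E^2 * r * k / (r - 1) * (1 / (1 + k * x)^3) \<le> E^2 * r * k / (r - 1) * (1 / (1 + k * v)^3)"
    by (rule mult_left_mono[OF inv c0])
  moreover have "- (E^2 * r / (2 * (r - 1)) * (- 2 * k / (1 + k * x)^3)) = E^2 * r * k / (r - 1) * (1 / (1 + k * x)^3)"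
  proof -
    have "(1 + k * x)^3 \<noteq> 0" using lv \<open>1 + k * v \<le> 1 + k * x\<close> by simp
    then show ?thesis using aux_m[of "r - 1" "(1 + k * x)^3" "E^2" r k] assms(1) by simp
  qed
  moreover have "E^2 * r * k / (r - 1) * (1 / (1 + k * v)^3) = E^2 * r * (B^2 * r^2 / 4) / ((r - 1) * (1 + (B^2 * r^2 / 4) * v)^3)"
    by (simp add: k_def)
  ultimately have B: "- (E^2 * r / (2 * (r - 1)) * (- 2 * k / (1 + k * x)^3)) \<le> E^2 * r * (B^2 * r^2 / 4) / ((r - 1) * (1 + (B^2 * r^2 / 4) * v)^3)"
    by simp
  have "Wu B L E r x = L^2 / (2 * r^2) * ((2 * (1 + k * x) * k * x - (1 + k * x)^2) / x^2) - E^2 * r / (2 * (r - 1)) * (- 2 * k / (1 + k * x)^3)"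
    unfolding Wu_def lx e ..
  then show ?thesis unfolding Phi_def using A B by (simp add: k_def)
qed

lemma Phi_1: assumes "1 < r" shows "Phi B L E r 1 = Wu B L E r 1"
proof -
  define k where "k = B^2 * r^2 / 4"
  have lx: "lam B r 1 = 1 + k" unfolding lam_def k_def by simp
  have "0 \<le> k" unfolding k_def by simp
  then have l0: "1 + k \<noteq> 0" by linarith
  have e: "B^2/4*r^2 = k" unfolding k_def by simp
  have m: "r - 1 \<noteq> 0" using assms by simp
  have "Wu B L E r 1 = L^2 / (2 * r^2) * ((2 * (1 + k) * k * 1 - (1 + k)^2) / 1^2) - E^2 * r / (2 * (r - 1)) * (- 2 * k / (1 + k)^3)"
    unfolding Wu_def lx e ..
  also have "\<dots> = L^2 / (2 * r^2) * (2 * (1 + k) * k - (1 + k)^2) + E^2 * r * k / ((r - 1) * (1 + k)^3)"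
    using aux_m[OF m, of "(1+k)^3" "E^2" r k] l0 by simp
  also have "2 * (1 + k) * k - (1 + k)^2 = k^2 - 1" by (simp add: algebra_simps power2_eq_square)
  finally show ?thesis unfolding Phi_def k_def by simp
qed

lemma Phi_cont_v: "isCont (\<lambda>v. Phi B L E r v) v0" if "1 < r" "0 \<le> v0"
proof -
  have "0 < 1 + (B^2 * r^2 / 4) * v0" using that by (simp add: add_pos_nonneg)
  then show ?thesis unfolding Phi_def using that by (auto intro!: continuous_intros)
qed

lemma Phi_cont_r: "isCont (\<lambda>r. Phi B L E r v) r0" if "1 < r0" "0 \<le> v"
proof -
  have "0 < 1 + (B^2 * r0^2 / 4) * v" using that by (simp add: add_pos_nonneg)
  then show ?thesis unfolding Phi_def using that by (auto intro!: continuous_intros)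
qed

lemma isCont_neg_nbhd: fixes f :: "real \<Rightarrow> real"
  assumes "isCont f x" "f x < 0" shows "\<exists>d>0. \<forall>y. \<bar>y - x\<bar> < d \<longrightarrow> f y < 0"
proof -
  have "\<forall>\<^sub>F y in at x. f y < 0" using order_tendstoD(2)[OF assms(1)[unfolded isCont_def] assms(2)] .
  then obtain d where "d > 0" "\<forall>y. y \<noteq> x \<and> dist y x < d \<longrightarrow> f y < 0"
    unfolding eventually_at by auto
  then show ?thesis using assms(2) by (intro exI[of _ d]) (auto simp: dist_real_def)
qed


lemma strict_min_gen:
  fixes B L E rc P :: real
  assumes rc1: "1 < rc" and W0: "Wr B L E rc 1 = 0"
    and DP: "((\<lambda>r. Wr B L E r 1) has_real_derivative P) (at rc)" and P0: "0 < P"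
    and Wun: "Wu B L E rc 1 < 0"
  shows "strict_local_min2 (Veff B L E) rc (pi/2)"
proof -
  obtain d1 where d1: "d1 > 0" "\<forall>h>0. h < d1 \<longrightarrow> Wr B L E rc 1 < Wr B L E (rc + h) 1"
    using DERIV_pos_inc_right[OF DP P0] by auto
  obtain d2 where d2: "d2 > 0" "\<forall>h>0. h < d2 \<longrightarrow> Wr B L E (rc - h) 1 < Wr B L E rc 1"
    using DERIV_pos_inc_left[OF DP P0] by auto
  define dr where "dr = min d1 (min d2 (rc - 1))"
  have dr: "dr > 0" using d1 d2 rc1 by (simp add: dr_def)
  have rpart: "Wf B L E rc 1 < Wf B L E x 1" if x: "\<bar>x - rc\<bar> < dr" "x \<noteq> rc" for x
  proof (cases "rc < x")
    case True
    have "\<exists>z. rc < z \<and> z < x \<and> Wf B L E x 1 - Wf B L E rc 1 = (x - rc) * Wr B L E z 1"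
      by (rule MVT2[OF True]) (rule W_dr, use rc1 in auto)
    then obtain z where z: "rc < z" "z < x" "Wf B L E x 1 - Wf B L E rc 1 = (x - rc) * Wr B L E z 1" by blast
    have "z - rc < d1" using z x True by (simp add: dr_def)
    then have "0 < Wr B L E z 1" using d1(2)[rule_format, of "z - rc"] z W0 by simp
    then have "0 < (x - rc) * Wr B L E z 1" using True by simp
    then show ?thesis using z by simp
  next
    case False
    then have xr: "x < rc" using x by simp
    have x1: "1 < x" using x by (simp add: dr_def abs_less_iff)
    have "\<exists>z. x < z \<and> z < rc \<and> Wf B L E rc 1 - Wf B L E x 1 = (rc - x) * Wr B L E z 1"
      by (rule MVT2[OF xr]) (rule W_dr, use x1 in auto)
    then obtain z where z: "x < z" "z < rc" "Wf B L E rc 1 - Wf B L E x 1 = (rc - x) * Wr B L E z 1" by blast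
    have "rc - z < d2" using z x xr by (simp add: dr_def)
    then have "Wr B L E z 1 < 0" using d2(2)[rule_format, of "rc - z"] z W0 by simp
    then have "(rc - x) * Wr B L E z 1 < 0" using xr by (simp add: mult_pos_neg)
    then show ?thesis using z by simp
  qed
  have "isCont (\<lambda>v. Phi B L E rc v) 1" by (rule Phi_cont_v) (use rc1 in auto)
  moreover have "Phi B L E rc 1 < 0" using Phi_1[OF rc1] Wun by simp
  ultimately obtain d3 where d3: "d3 > 0" "\<forall>y. \<bar>y - 1\<bar> < d3 \<longrightarrow> Phi B L E rc y < 0"
    using isCont_neg_nbhd by blast
  define u0 where "u0 = max (1/2) (1 - d3/2)"
  have u0: "0 < u0" "u0 < 1" using d3 by (auto simp: u0_def)
  have "Phi B L E rc u0 < 0" using d3 u0 by (intro d3(2)[rule_format]) (auto simp: u0_def)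
  moreover have "isCont (\<lambda>r. Phi B L E r u0) rc" by (rule Phi_cont_r) (use rc1 u0 in auto)
  ultimately obtain d4 where d4: "d4 > 0" "\<forall>r. \<bar>r - rc\<bar> < d4 \<longrightarrow> Phi B L E r u0 < 0"
    using isCont_neg_nbhd[where f="\<lambda>r. Phi B L E r u0" and x=rc] by blast
  define du where "du = min d4 (rc - 1)"
  have du: "du > 0" using d4 rc1 by (simp add: du_def)
  have upart: "Wf B L E x 1 < Wf B L E x u" if x: "\<bar>x - rc\<bar> < du" and u: "u0 \<le> u" "u < 1" for x u
  proof -
    have x1: "1 < x" using x by (simp add: du_def abs_less_iff)
    have "\<exists>z. u < z \<and> z < 1 \<and> Wf B L E x 1 - Wf B L E x u = (1 - u) * Wu B L E x z"
      by (rule MVT2[OF u(2)]) (rule W_du, use x1 u u0 in auto)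
    then obtain z where z: "u < z" "z < 1" "Wf B L E x 1 - Wf B L E x u = (1 - u) * Wu B L E x z" by blast
    have "Wu B L E x z \<le> Phi B L E x u0" by (rule Wu_bound) (use x1 u0 u z in auto)
    also have "\<dots> < 0" using d4(2) x by (simp add: du_def)
    finally have "(1 - u) * Wu B L E x z < 0" using u by (simp add: mult_pos_neg)
    then show ?thesis using z by simp
  qed
  define e where "e = min (min dr du) (min (sqrt (1 - u0)) 1)"
  have e: "e > 0" using dr du u0 by (simp add: e_def)
  show ?thesis unfolding strict_local_min2_def
  proof (intro exI[of _ e] conjI allI impI)
    show "0 < e" by (rule e)
    fix x y assume H: "(x, y) \<noteq> (rc, pi / 2) \<and> dist (x, y) (rc, pi / 2) < e"
    have hx: "\<bar>x - rc\<bar> < e" using H dist_fst_le[of "(x, y)" "(rc, pi/2)"] by (simp add: dist_real_def)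
    have hy: "\<bar>y - pi/2\<bar> < e" using H dist_snd_le[of "(x, y)" "(rc, pi/2)"] by (simp add: dist_real_def)
    have x1: "1 < x" using hx by (simp add: e_def dr_def abs_less_iff)
    define t where "t = y - pi/2"
    have sy: "sin y = cos t" unfolding t_def by (simp add: cos_diff)
    have s2: "(sin y)^2 = 1 - (sin t)^2" unfolding sy by (simp add: cos_squared_eq)
    have "\<bar>sin t\<bar> \<le> \<bar>t\<bar>" by (rule abs_sin_x_le_abs_x)
    moreover have "\<bar>t\<bar> < sqrt (1 - u0)" using hy by (simp add: t_def e_def)
    ultimately have "\<bar>sin t\<bar> < sqrt (1 - u0)" by linarith
    then have "(sin t)^2 < 1 - u0"
      using u0 by (metis abs_ge_zero real_sqrt_abs real_sqrt_less_iff power2_abs)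
    then have su0: "u0 < (sin y)^2" unfolding s2 by simp
    have V0: "Veff B L E rc (pi/2) = Wf B L E rc 1" using Veff_W[OF rc1] by simp
    have Vx: "Veff B L E x y = Wf B L E x ((sin y)^2)" using Veff_W[OF x1] by simp
    show "Veff B L E rc (pi / 2) < Veff B L E x y"
    proof (cases "y = pi/2")
      case True
      then have "(sin y)^2 = 1" by (simp only:) simp
      have "x \<noteq> rc" using H True by simp
      moreover have "\<bar>x - rc\<bar> < dr" using hx by (simp add: e_def)
      ultimately show ?thesis unfolding V0 Vx \<open>(sin y)^2 = 1\<close> using rpart by simp
    next
      case False
      then have "t \<noteq> 0" by (simp add: t_def)
      moreover have "\<bar>t\<bar> < 1" using hy by (simp add: t_def e_def)
      ultimately have "sin t \<noteq> 0" using sin_eq_0_pi[of t] pi_gt3 by (auto simp: abs_less_iff)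
      then have sl1: "(sin y)^2 < 1" unfolding s2 by simp
      have "Wf B L E x 1 < Wf B L E x ((sin y)^2)"
        by (rule upart) (use hx su0 sl1 in \<open>auto simp: e_def\<close>)
      moreover have "Wf B L E rc 1 \<le> Wf B L E x 1"
      proof (cases "x = rc")
        case True then show ?thesis by simp
      next
        case False
        moreover have "\<bar>x - rc\<bar> < dr" using hx by (simp add: e_def)
        ultimately show ?thesis using rpart by (simp add: less_imp_le)
      qed
      ultimately show ?thesis unfolding V0 Vx by simp
    qed
  qed
qed


lemma Wrr_D: assumes rc1: "1 < rc" and Zp: "0 < Zf B rc"
  shows "((\<lambda>r. Wr B (Lc B rc) (Ec B rc) r 1) has_real_derivative
     Nf B rc / (64 * (bf B rc)^2 * rc^2 * (rc - 1) * Zf B rc)) (at rc)"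
proof -
  let ?L = "Lc B rc" and ?E = "Ec B rc"
  have d: "((\<lambda>r. ?L^2 * F1 B r + ?E^2 * F2 B r) has_real_derivative ?L^2 * F1d B rc + ?E^2 * F2d B rc) (at rc)"
    by (intro DERIV_add DERIV_cmult F1_D F2_D) (use rc1 in auto)
  have v: "?L^2 * F1d B rc + ?E^2 * F2d B rc = Nf B rc / (64 * (bf B rc)^2 * rc^2 * (rc - 1) * Zf B rc)"
    unfolding Lc_sq[OF rc1 Zp] Ec_sq[OF rc1 Zp] F1d_def F2d_def Nf_Mq
    by (rule alg_Wrr) (use rc1 Zp b_pos[of rc B] in \<open>auto simp: bf_def\<close>)
  show ?thesis unfolding v[symmetric]
    by (rule has_field_derivative_transform_within_open[OF d, of "{1<..}"]) (use rc1 Wr1F in auto)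
qed

lemma local_props:
  assumes rc1: "1 < rc" and Zp: "0 < Zf B rc"
  shows "HamVF B (Lc B rc) (Ec B rc) (phase_pt 0 0 rc (pi/2)) = 0"
    and "Ham B (Lc B rc) (Ec B rc) (phase_pt 0 0 rc (pi/2)) = -1/2"
    and "Nf B rc < 0 \<Longrightarrow> saddle_center (linHam B (Lc B rc) (Ec B rc) (phase_pt 0 0 rc (pi/2)))
              \<and> lin_unstable (linHam B (Lc B rc) (Ec B rc) (phase_pt 0 0 rc (pi/2)))"
    and "0 < Nf B rc \<Longrightarrow> center_center (linHam B (Lc B rc) (Ec B rc) (phase_pt 0 0 rc (pi/2)))
              \<and> strict_local_min2 (Veff B (Lc B rc) (Ec B rc)) rc (pi/2)"
proof -
  let ?L = "Lc B rc" and ?E = "Ec B rc"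
  show "HamVF B ?L ?E (phase_pt 0 0 rc (pi/2)) = 0"
    using HamVF_z0[OF rc1] Wr_zero[OF rc1 Zp] by simp
  show "Ham B ?L ?E (phase_pt 0 0 rc (pi/2)) = -1/2"
    using Wf_val[OF rc1 Zp] Veff_W[OF rc1, of B ?L ?E "pi/2"] by (simp add: Ham_pp hh_def)
  define p where "p = Nf B rc / (64 * (bf B rc)^2 * rc^2 * (rc - 1) * Zf B rc)"
  have DP: "((\<lambda>r. Wr B ?L ?E r 1) has_real_derivative p) (at rc)" unfolding p_def by (rule Wrr_D[OF rc1 Zp])
  have dp: "deriv (\<lambda>r. Wr B ?L ?E r 1) rc = p" using DP by (rule DERIV_imp_deriv)
  have den: "0 < 64 * (bf B rc)^2 * rc^2 * (rc - 1) * Zf B rc" using rc1 Zp b_pos[OF rc1 Zp] by simp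
  have Lp: "0 < Lam B rc (pi/2)" unfolding Lam_def by (simp add: add_pos_nonneg)
  have a: "0 < Gam rc / (Lam B rc (pi/2))^2" using rc1 Lp by (simp add: Gam_def)
  have c: "0 < 1 / (rc^2 * (Lam B rc (pi/2))^2)" using rc1 Lp by simp
  have q: "B^2 * rc^2 / 4 < 1" using Bsmall[OF rc1 Zp] by simp
  have h: "0 < - 2 * Wu B ?L ?E rc 1" unfolding Wu_val[OF rc1 Zp] using q Zp by (simp add: field_simps)
  have L: "linHam B ?L ?E (phase_pt 0 0 rc (pi/2)) = Mx p (- 2 * Wu B ?L ?E rc 1)
            (Gam rc / (Lam B rc (pi/2))^2) (1 / (rc^2 * (Lam B rc (pi/2))^2))"
    using linHam_z0[OF rc1] dp by simp
  have ch: "0 < 1 / (rc^2 * (Lam B rc (pi/2))^2) * (- 2 * Wu B ?L ?E rc 1)" using c h by (rule mult_pos_pos)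
  show "Nf B rc < 0 \<Longrightarrow> saddle_center (linHam B ?L ?E (phase_pt 0 0 rc (pi/2)))
              \<and> lin_unstable (linHam B ?L ?E (phase_pt 0 0 rc (pi/2)))"
  proof -
    assume N: "Nf B rc < 0"
    have "p < 0" unfolding p_def using N den by (simp add: divide_neg_pos)
    then have "Gam rc / (Lam B rc (pi/2))^2 * p < 0" using mult_pos_neg[OF a] by blast
    then show ?thesis unfolding L by (rule Mx_saddle[OF _ ch])
  qed
  show "0 < Nf B rc \<Longrightarrow> center_center (linHam B ?L ?E (phase_pt 0 0 rc (pi/2)))
              \<and> strict_local_min2 (Veff B ?L ?E) rc (pi/2)"
  proof -
    assume N: "0 < Nf B rc"
    have pp: "0 < p" unfolding p_def using N den by simp
    then have "0 < Gam rc / (Lam B rc (pi/2))^2 * p" using mult_pos_pos[OF a] by blast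
    then have "center_center (linHam B ?L ?E (phase_pt 0 0 rc (pi/2)))" unfolding L by (rule Mx_center[OF _ ch])
    moreover have "strict_local_min2 (Veff B ?L ?E) rc (pi/2)"
      by (rule strict_min_gen[OF rc1 Wr_zero[OF rc1 Zp] DP pp]) (use h in simp)
    ultimately show ?thesis by simp
  qed
qed


lemma Zq_gen: "Zf B r = 2 * r - 3 - (B^2 * r^2 / 4) * (6 * r - 5)"
  unfolding Zf_def by (simp add: field_simps)

lemma Z_fact: fixes B r1 r2 x :: real
  assumes "Zf B r1 = 0" "Zf B r2 = 0" "r1 \<noteq> r2"
  shows "Zf B x = (x - r1) * (r2 - x) * (B^2 * (3/2 * (x + r1 + r2) - 5/4))"
proof -
  have "(r2 - r1) * (Zf B x - (x - r1) * (r2 - x) * (B^2 * (3/2 * (x + r1 + r2) - 5/4)))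
      = (r2 - x) * Zf B r1 + (x - r1) * Zf B r2"
    unfolding Zf_def by algebra
  then have "(r2 - r1) * (Zf B x - (x - r1) * (r2 - x) * (B^2 * (3/2 * (x + r1 + r2) - 5/4))) = 0"
    using assms by simp
  then show ?thesis using assms(3) by simp
qed

lemma Mq_expand: "Mq q r * (6 * r-5)^3 = (r-3) *(6 * r-5)^3 + (q *(6 * r-5)) *(16 * r^2-39 * r+21) *(6 * r-5)^2
   - (q *(6 * r-5))^2 *(24 * r^2-51 * r+25) *(6 * r-5) + (q *(6 * r-5))^3 *(24 * r^2-37 * r+15)"
  unfolding Mq_def by algebra

lemma Mq_curve: assumes "q *(6 * r-5) = 2 * r-3"
  shows "Mq q r * (6 * r-5)^3 = (12 * r^2 - 32 * r + 15) / 2 * (32 + 160 *(r-3/2) + 256 *(r-3/2)^2 + 128 *(r-3/2)^3)"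
  unfolding Mq_expand assms by algebra

lemma D_expand: fixes s q v w :: real
  assumes "v = q *(6 * s+4)/2" "w = s - v"
  shows "((s + 3/2) + q *(64 *(s + 3/2)^2-117 *(s + 3/2)+42) - q^2 *(144 *(s + 3/2)^2-255 *(s + 3/2)+100)
       + q^3 *(192 *(s + 3/2)^2-259 *(s + 3/2)+90)) * (6 * s+4)^3 =
    96+496 * s+336 * v+936 * s^2+2744 * s * v+664 * v * w+756 * s^3+6176 * s^2 * v+3828 * s * v * w+1068 * v^3+216 * s^4+4992 * s^3 * v
   +6552 * s^2 * v * w+2536 * s * v^3+1152 * s^4 * v+3456 * s^3 * v * w+1536 * s^2 * v^3"
  unfolding assms by algebra

lemma E_pos: fixes s v w :: real assumes "0 < s" "0 \<le> v" "0 \<le> w"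
  shows "0 < 96+496 * s+336 * v+936 * s^2+2744 * s * v+664 * v * w+756 * s^3+6176 * s^2 * v+3828 * s * v * w+1068 * v^3+216 * s^4+4992 * s^3 * v
   +6552 * s^2 * v * w+2536 * s * v^3+1152 * s^4 * v+3456 * s^3 * v * w+1536 * s^2 * v^3"
  using assms by (intro add_pos_nonneg add_nonneg_nonneg mult_nonneg_nonneg) auto

definition Dq :: "real \<Rightarrow> real \<Rightarrow> real" where
  "Dq q r = r + q * (64 * r^2 - 117 * r + 42) - q^2 * (144 * r^2 - 255 * r + 100) + q^3 * (192 * r^2 - 259 * r + 90)"

definition Nd :: "real \<Rightarrow> real \<Rightarrow> real" where
  "Nd B r = 64 + 16 * B^2 * (64 * r^3 - 117 * r^2 + 42 * r) - 4 * B^4 * (144 * r^5 - 255 * r^4 + 100 * r^3)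
     + B^6 * (192 * r^7 - 259 * r^6 + 90 * r^5)"

lemma Nf_poly: "Nf B r = 64 * (r - 3) + 16 * B^2 * (16 * r^4 - 39 * r^3 + 21 * r^2) - 4 * B^4 * (24 * r^6 - 51 * r^5 + 25 * r^4)
     + B^6 * (24 * r^8 - 37 * r^7 + 15 * r^6)"
  unfolding Nf_def by algebra

lemma Nf_D: "((\<lambda>r. Nf B r) has_real_derivative Nd B r) (at r)"
proof -
  have "((\<lambda>r. 64 * (r - 3) + 16 * B^2 * (16 * r^4 - 39 * r^3 + 21 * r^2) - 4 * B^4 * (24 * r^6 - 51 * r^5 + 25 * r^4)
     + B^6 * (24 * r^8 - 37 * r^7 + 15 * r^6)) has_real_derivative Nd B r) (at r)"
    unfolding Nd_def by (auto intro!: derivative_eq_intros)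
  then show ?thesis unfolding Nf_poly .
qed

lemma rNd: "r * Nd B r = 64 * Dq (B^2 * r^2 / 4) r"
  unfolding Nd_def Dq_def by (simp add: eval_nat_numeral field_simps)

lemma Nd_pos: assumes "3/2 < r" "0 \<le> Zf B r" shows "0 < Nd B r"
proof -
  define s where "s = r - 3/2"
  define q where "q = B^2 * r^2 / 4"
  define v where "v = q * (6 * s + 4) / 2"
  define w where "w = s - v"
  have s0: "0 < s" using assms by (simp add: s_def)
  have q0: "0 \<le> q" by (simp add: q_def)
  have v0: "0 \<le> v" using q0 s0 by (simp add: v_def)
  have "0 \<le> 2 * r - 3 - q * (6 * r - 5)" using assms(2) unfolding Zq_gen q_def .
  moreover have "w = (2 * r - 3 - q * (6 * r - 5)) / 2" by (simp add: w_def v_def s_def field_simps)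
  ultimately have w0: "0 \<le> w" by simp
  have r: "r = s + 3/2" by (simp add: s_def)
  have "Dq q r * (6 * s + 4)^3 = 96+496 * s+336 * v+936 * s^2+2744 * s * v+664 * v * w+756 * s^3+6176 * s^2 * v+3828 * s * v * w+1068 * v^3+216 * s^4+4992 * s^3 * v
   +6552 * s^2 * v * w+2536 * s * v^3+1152 * s^4 * v+3456 * s^3 * v * w+1536 * s^2 * v^3"
    unfolding Dq_def r by (rule D_expand) (simp_all add: v_def w_def)
  also have "\<dots> > 0" by (rule E_pos[OF s0 v0 w0])
  finally have "0 < Dq q r * (6 * s + 4)^3" .
  moreover have "0 < (6 * s + 4)^3" using s0 by simp
  ultimately have "0 < Dq q r" by (simp add: zero_less_mult_iff)
  then have "0 < r * Nd B r" unfolding rNd q_def[symmetric] by simp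
  then show ?thesis using assms by (simp add: zero_less_mult_iff)
qed


lemma s19: "(sqrt 19)^2 = (19::real)" "4 < sqrt (19::real)"
proof -
  show "(sqrt 19)^2 = (19::real)" by simp
  show "4 < sqrt (19::real)" by (rule real_less_rsqrt) simp
qed

lemma Bn_sq: "Bn^2 = 48 / (169 + 38 * sqrt 19)"
proof -
  have "0 \<le> 169 + 38 * sqrt (19::real)" by simp
  then show ?thesis unfolding Bn_def by (simp add: power_divide power_mult_distrib)
qed

lemma Z_star: assumes "0 \<le> B" "B < Bn" shows "0 < Zf B ((8 + sqrt 19) / 6)"
proof -
  define s where "s = sqrt (19::real)"
  have s2: "s^2 = 19" and s4: "4 < s" using s19 by (simp_all add: s_def)
  have "B^2 < Bn^2" using assms by (intro power_strict_mono) auto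
  then have "B^2 < 48 / (169 + 38 * s)" unfolding Bn_sq s_def .
  moreover have p: "0 < 169 + 38 * s" using s4 by simp
  ultimately have b: "B^2 * (169 + 38 * s) < 48" by (simp add: field_simps)
  define t where "t = (8 + s) / 6"
  have st: "s = 6 * t - 8" by (simp add: t_def field_simps)
  have z4: "4 * Zf B t = 8 * t - 12 - B^2 * t^2 * (6 * t - 5)" by (simp add: Zf_def field_simps)
  have e: "144 * (8 * t - 12 - B^2 * t^2 * (6 * t - 5)) - 4 * (48 * (s - 1) - B^2 * ((169 + 38 * s) * (s - 1)))
     = B^2 * (108 - 24 * t) * (s^2 - 19)"
    unfolding st by algebra
  have "144 * (8 * t - 12 - B^2 * t^2 * (6 * t - 5)) = 4 * (48 * (s - 1) - B^2 * ((169 + 38 * s) * (s - 1)))"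
    using e s2 by simp
  then have "Zf B t = ((s - 1) / 3 - B^2 * ((169 + 38 * s) * (s - 1)) / 144)"
    using z4 by (simp add: field_simps)
  then have "Zf B ((8 + s) / 6) = ((s - 1) / 3 - B^2 * ((169 + 38 * s) * (s - 1)) / 144)"
    by (simp add: t_def)
  also have "\<dots> = (s - 1) * (48 - B^2 * (169 + 38 * s)) / 144" by (simp add: field_simps)
  also have "\<dots> > 0" using b s4 by simp
  finally show ?thesis by (simp add: s_def)
qed

lemma quad_fact: "12 * r^2 - 32 * r + 15 = 12 * (r - (8 + sqrt 19) / 6) * (r - (8 - sqrt 19) / 6)"
proof -
  define s where "s = sqrt (19::real)"
  have s2: "s^2 = 19" by (simp add: s_def)
  have "12 * (r - (8 + s) / 6) * (r - (8 - s) / 6) = 12 * ((6 * r - 8 - s) * (6 * r - 8 + s)) / 36"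
    by (simp add: field_simps)
  also have "(6 * r - 8 - s) * (6 * r - 8 + s) = (6 * r - 8)^2 - s^2"
    by (simp add: algebra_simps power2_eq_square)
  also have "\<dots> = 3 * (12 * r^2 - 32 * r + 15)"
    unfolding s2 by (simp add: algebra_simps power2_eq_square)
  finally show ?thesis by (simp add: s_def)
qed

lemma Zf_cont: "isCont (Zf B) x" unfolding Zf_def by (intro continuous_intros)

lemma pos_case: assumes B0: "0 < B" and BB: "B < Bn"
  shows "\<exists>r1 r2. 3/2 < r1 \<and> r1 < r2 \<and> (\<forall>x. (1 < x \<and> 0 < Zf B x) \<longleftrightarrow> (r1 < x \<and> x < r2))
     \<and> Nf B r1 < 0 \<and> 0 < Nf B r2 \<and> (\<forall>x. r1 \<le> x \<and> x \<le> r2 \<longrightarrow> 0 < Nd B x)"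
proof -
  define s where "s = sqrt (19::real)"
  have s4: "4 < s" using s19 by (simp add: s_def)
  define rs where "rs = (8 + s) / 6"
  have rsZ: "0 < Zf B rs" using Z_star[of B] B0 BB by (simp add: rs_def s_def)
  have rs1: "3/2 < rs" using s4 by (simp add: rs_def)
  have Z32: "Zf B (3/2) < 0" using B0 unfolding Zf_def by (simp add: power2_eq_square)
  obtain r1 where r1: "3/2 \<le> r1" "r1 \<le> rs" "Zf B r1 = 0"
    using IVT[of "Zf B" "3/2" 0 rs] Z32 rsZ rs1 Zf_cont by force
  have "r1 \<noteq> 3/2" using Z32 r1(3) by (metis less_irrefl)
  moreover have "r1 \<noteq> rs" using rsZ r1(3) by (metis less_irrefl)
  ultimately have r1s: "3/2 < r1" "r1 < rs" using r1 by auto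
  define R where "R = rs + 3 / B"
  have R1: "rs < R" using B0 by (simp add: R_def)
  have h3: "3 \<le> B * R" using B0 rs1 by (simp add: R_def field_simps)
  have "3 * 3 \<le> (B * R) * (B * R)" by (rule mult_mono) (use h3 in auto)
  then have BR: "9 \<le> B^2 * R^2" by (simp add: power2_eq_square mult_ac)
  have "B^2 * R^2 * (3/2 * R - 5/4) \<ge> 9 * (3/2 * R - 5/4)" using BR R1 rs1 by (intro mult_right_mono) auto
  then have "2 * R - 3 - B^2 * R^2 * (3/2 * R - 5/4) \<le> 2 * R - 3 - 9 * (3/2 * R - 5/4)" by linarith
  also have "\<dots> < 0" using R1 rs1 by (simp add: field_simps)
  finally have ZR: "Zf B R < 0" unfolding Zf_def .
  obtain r2 where r2: "rs \<le> r2" "r2 \<le> R" "Zf B r2 = 0"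
    using IVT2[of "Zf B" R 0 rs] ZR rsZ R1 Zf_cont by force
  have "r2 \<noteq> rs" using rsZ r2(3) by (metis less_irrefl)
  then have r2s: "rs < r2" using r2 by auto
  have r12: "r1 < r2" using r1s r2s by simp
  have Zx: "Zf B x = (x - r1) * (r2 - x) * (B^2 * (3/2 * (x + r1 + r2) - 5/4))" for x
    by (rule Z_fact) (use r1 r2 r12 in auto)
  have K: "0 < B^2 * (3/2 * (x + r1 + r2) - 5/4)" if "0 \<le> x" for x
    using that r1s r2s rs1 B0 by (intro mult_pos_pos) auto
  have char: "(1 < x \<and> 0 < Zf B x) \<longleftrightarrow> (r1 < x \<and> x < r2)" for x
  proof
    assume H: "1 < x \<and> 0 < Zf B x"
    then have "0 < (x - r1) * (r2 - x) * (B^2 * (3/2 * (x + r1 + r2) - 5/4))" using Zx by simp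
    moreover have "0 < B^2 * (3/2 * (x + r1 + r2) - 5/4)" using K[of x] H by simp
    ultimately have P: "0 < (x - r1) * (r2 - x)" by (rule zero_less_mult_pos2)
    show "r1 < x \<and> x < r2"
    proof (rule ccontr)
      assume "\<not> (r1 < x \<and> x < r2)"
      then have "x \<le> r1 \<or> r2 \<le> x" by auto
      then have "(x - r1) * (r2 - x) \<le> 0" using r12 by (auto intro: mult_nonpos_nonneg mult_nonneg_nonpos)
      with P show False by simp
    qed
  next
    assume H: "r1 < x \<and> x < r2"
    then have "0 < (x - r1) * (r2 - x) * (B^2 * (3/2 * (x + r1 + r2) - 5/4))"
      using K[of x] r1s rs1 by (intro mult_pos_pos) auto
    then show "1 < x \<and> 0 < Zf B x" using Zx H r1s by simp
  qed
  have quad: "12 * r^2 - 32 * r + 15 = 12 * (r - rs) * (r - (8 - s) / 6)" for r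
    using quad_fact[of r] by (simp add: rs_def s_def)
  have curve: "Nf B r * (6 * r - 5)^3 = 64 * ((12 * r^2 - 32 * r + 15) / 2 * (32 + 160*(r-3/2) + 256*(r-3/2)^2 + 128*(r-3/2)^3))"
    if "Zf B r = 0" for r
  proof -
    have h: "(B^2 * r^2 / 4) * (6 * r - 5) = 2 * r - 3" using that unfolding Zq_gen by linarith
    show ?thesis unfolding Nf_Mq mult.assoc Mq_curve[OF h] ..
  qed
  have polypos: "0 < 32 + 160*(r-3/2) + 256*(r-3/2)^2 + 128*(r-3/2)^3" if "3/2 < r" for r :: real
    using that by (intro add_pos_nonneg) auto
  have N1: "Nf B r1 < 0"
  proof -
    have "12 * r1^2 - 32 * r1 + 15 < 0" unfolding quad using r1s s4 by (intro mult_neg_pos mult_pos_neg) auto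
    then have "Nf B r1 * (6 * r1 - 5)^3 < 0" unfolding curve[OF r1(3)] using polypos[OF r1s(1)]
      by (simp add: mult_neg_pos)
    moreover have "0 < (6 * r1 - 5)^3" using r1s by simp
    ultimately show ?thesis by (simp add: mult_less_0_iff)
  qed
  have N2: "0 < Nf B r2"
  proof -
    have "0 < 12 * r2^2 - 32 * r2 + 15" unfolding quad using r2s s4 rs1 by (intro mult_pos_pos) auto
    then have "0 < Nf B r2 * (6 * r2 - 5)^3" unfolding curve[OF r2(3)] using polypos[of r2] r2s rs1
      by simp
    moreover have "0 < (6 * r2 - 5)^3" using r2s rs1 by simp
    ultimately show ?thesis by (simp add: zero_less_mult_iff)
  qed
  have Nd: "0 < Nd B x" if "r1 \<le> x" "x \<le> r2" for x
  proof (rule Nd_pos)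
    show "3/2 < x" using that r1s by simp
    show "0 \<le> Zf B x" unfolding Zx using that K[of x] r1s by (intro mult_nonneg_nonneg) auto
  qed
  show ?thesis using r1s r12 char N1 N2 Nd by blast
qed


lemma Nf_cont: "isCont (Nf B) x" unfolding Nf_def by (intro continuous_intros)

lemma Nf_mono: assumes "\<forall>x. a \<le> x \<and> x \<le> b \<longrightarrow> 0 < Nd B x" "a \<le> x" "x < y" "y \<le> b"
  shows "Nf B x < Nf B y"
proof (rule DERIV_pos_imp_increasing[OF assms(3)])
  fix t assume "x \<le> t" "t \<le> y"
  then have "0 < Nd B t" using assms by auto
  then show "\<exists>d. DERIV (Nf B) t :> d \<and> 0 < d" using Nf_D[of B t] by auto
qed

theorem mainTheorem2:
  fixes B :: real
  assumes "0 \<le> B" and "B < Bn"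
  shows
    "(\<exists>r1 (r2::ereal). {r. 1 < r \<and> Zf B r > 0} = {r. r1 < r \<and> ereal r < r2}
         \<and> ereal r1 < r2 \<and> (r2 = \<infinity> \<longleftrightarrow> B = 0))
     \<and> (\<forall>rc. 1 < rc \<and> Zf B rc > 0 \<longrightarrow>
          HamVF B (Lc B rc) (Ec B rc) (phase_pt 0 0 rc (pi/2)) = 0
          \<and> Ham B (Lc B rc) (Ec B rc) (phase_pt 0 0 rc (pi/2)) = -1/2)
     \<and> (\<exists>rs. 1 < rs \<and> Zf B rs > 0 \<and> Nf B rs = 0
          \<and> (\<forall>rc. 1 < rc \<and> Zf B rc > 0 \<and> rc < rs \<longrightarrow>
                 saddle_center (linHam B (Lc B rc) (Ec B rc) (phase_pt 0 0 rc (pi/2)))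
                 \<and> lin_unstable (linHam B (Lc B rc) (Ec B rc) (phase_pt 0 0 rc (pi/2))))
          \<and> (\<forall>rc. 1 < rc \<and> Zf B rc > 0 \<and> rs < rc \<longrightarrow>
                 center_center (linHam B (Lc B rc) (Ec B rc) (phase_pt 0 0 rc (pi/2)))
                 \<and> strict_local_min2 (Veff B (Lc B rc) (Ec B rc)) rc (pi/2))
          \<and> (B = 0 \<longrightarrow> rs = 3))"
proof -
  have P2: "\<forall>rc. 1 < rc \<and> Zf B rc > 0 \<longrightarrow>
          HamVF B (Lc B rc) (Ec B rc) (phase_pt 0 0 rc (pi/2)) = 0
          \<and> Ham B (Lc B rc) (Ec B rc) (phase_pt 0 0 rc (pi/2)) = -1/2"
    using local_props(1,2) by simp
  show ?thesis
  proof (cases "B = 0")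
    case True
    have Z0: "Zf B r = 2 * r - 3" for r unfolding Zf_def True by simp
    have N0: "Nf B r = 64 * (r - 3)" for r unfolding Nf_def True by simp
    have P1: "{r. 1 < r \<and> Zf B r > 0} = {r. 3/2 < r \<and> ereal r < \<infinity>}" unfolding Z0 by auto
    have P3: "\<exists>rs. 1 < rs \<and> Zf B rs > 0 \<and> Nf B rs = 0
          \<and> (\<forall>rc. 1 < rc \<and> Zf B rc > 0 \<and> rc < rs \<longrightarrow>
                 saddle_center (linHam B (Lc B rc) (Ec B rc) (phase_pt 0 0 rc (pi/2)))
                 \<and> lin_unstable (linHam B (Lc B rc) (Ec B rc) (phase_pt 0 0 rc (pi/2))))
          \<and> (\<forall>rc. 1 < rc \<and> Zf B rc > 0 \<and> rs < rc \<longrightarrow>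
                 center_center (linHam B (Lc B rc) (Ec B rc) (phase_pt 0 0 rc (pi/2)))
                 \<and> strict_local_min2 (Veff B (Lc B rc) (Ec B rc)) rc (pi/2))
          \<and> (B = 0 \<longrightarrow> rs = 3)"
    proof (intro exI[of _ 3] conjI allI impI)
      show "1 < (3::real)" "0 < Zf B 3" "Nf B 3 = 0" "3 = (3::real)" by (simp_all add: Z0 N0)
      fix rc assume H: "1 < rc \<and> 0 < Zf B rc \<and> rc < 3"
      then have "Nf B rc < 0" by (simp add: N0)
      then show "saddle_center (linHam B (Lc B rc) (Ec B rc) (phase_pt 0 0 rc (pi/2)))"
        "lin_unstable (linHam B (Lc B rc) (Ec B rc) (phase_pt 0 0 rc (pi/2)))"
        using local_props(3)[of rc B] H by auto
    next
      fix rc assume H: "1 < rc \<and> 0 < Zf B rc \<and> 3 < rc"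
      then have "0 < Nf B rc" by (simp add: N0)
      then show "center_center (linHam B (Lc B rc) (Ec B rc) (phase_pt 0 0 rc (pi/2)))"
        "strict_local_min2 (Veff B (Lc B rc) (Ec B rc)) rc (pi/2)"
        using local_props(4)[of rc B] H by auto
    qed
    have A: "\<exists>r1 (r2::ereal). {r. 1 < r \<and> Zf B r > 0} = {r. r1 < r \<and> ereal r < r2}
         \<and> ereal r1 < r2 \<and> (r2 = \<infinity> \<longleftrightarrow> B = 0)"
    proof (intro exI[of _ "3/2::real"] exI[of _ "\<infinity>::ereal"] conjI)
      show "{r. 1 < r \<and> Zf B r > 0} = {r. 3/2 < r \<and> ereal r < \<infinity>}" by (rule P1)
      show "ereal (3/2) < \<infinity>" by simp
      show "((\<infinity>::ereal) = \<infinity>) = (B = 0)" using True by simp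
    qed
    show ?thesis by (rule conjI[OF A conjI[OF P2 P3]])
  next
    case False
    then have B0: "0 < B" using assms(1) by simp
    obtain r1 r2 where R: "3/2 < r1" "r1 < r2" "\<forall>x. (1 < x \<and> 0 < Zf B x) \<longleftrightarrow> (r1 < x \<and> x < r2)"
      "Nf B r1 < 0" "0 < Nf B r2" "\<forall>x. r1 \<le> x \<and> x \<le> r2 \<longrightarrow> 0 < Nd B x"
      using pos_case[OF B0 assms(2)] by blast
    have P1: "{r. 1 < r \<and> Zf B r > 0} = {r. r1 < r \<and> ereal r < ereal r2}" using R(3) by auto
    obtain rs where rs: "r1 \<le> rs" "rs \<le> r2" "Nf B rs = 0"
      using IVT[of "Nf B" r1 0 r2] R Nf_cont by force
    have "rs \<noteq> r1" using rs(3) R(4) by auto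
    then have rs1: "r1 < rs" using rs(1) by simp
    have "rs \<noteq> r2" using rs(3) R(5) by auto
    then have rs2: "rs < r2" using rs(2) by simp
    have P3: "\<exists>rs. 1 < rs \<and> Zf B rs > 0 \<and> Nf B rs = 0
          \<and> (\<forall>rc. 1 < rc \<and> Zf B rc > 0 \<and> rc < rs \<longrightarrow>
                 saddle_center (linHam B (Lc B rc) (Ec B rc) (phase_pt 0 0 rc (pi/2)))
                 \<and> lin_unstable (linHam B (Lc B rc) (Ec B rc) (phase_pt 0 0 rc (pi/2))))
          \<and> (\<forall>rc. 1 < rc \<and> Zf B rc > 0 \<and> rs < rc \<longrightarrow>
                 center_center (linHam B (Lc B rc) (Ec B rc) (phase_pt 0 0 rc (pi/2)))
                 \<and> strict_local_min2 (Veff B (Lc B rc) (Ec B rc)) rc (pi/2))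
          \<and> (B = 0 \<longrightarrow> rs = 3)"
    proof (intro exI[of _ rs] conjI allI impI)
      show "1 < rs" "0 < Zf B rs" using R(1,3) rs1 rs2 by auto
      show "Nf B rs = 0" by (rule rs(3))
      show "B = 0 \<Longrightarrow> rs = 3" using False by simp
      fix rc assume H: "1 < rc \<and> 0 < Zf B rc \<and> rc < rs"
      then have "r1 < rc" using R(3) by auto
      then have "Nf B rc < Nf B rs" using H rs2 by (intro Nf_mono[OF R(6)]) auto
      then have "Nf B rc < 0" using rs(3) by simp
      then show "saddle_center (linHam B (Lc B rc) (Ec B rc) (phase_pt 0 0 rc (pi/2)))"
        "lin_unstable (linHam B (Lc B rc) (Ec B rc) (phase_pt 0 0 rc (pi/2)))"
        using local_props(3)[of rc B] H by auto
    next
      fix rc assume H: "1 < rc \<and> 0 < Zf B rc \<and> rs < rc"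
      then have "rc < r2" using R(3) by auto
      then have "Nf B rs < Nf B rc" using H rs1 by (intro Nf_mono[OF R(6)]) auto
      then have "0 < Nf B rc" using rs(3) by simp
      then show "center_center (linHam B (Lc B rc) (Ec B rc) (phase_pt 0 0 rc (pi/2)))"
        "strict_local_min2 (Veff B (Lc B rc) (Ec B rc)) rc (pi/2)"
        using local_props(4)[of rc B] H by auto
    qed
    have A: "\<exists>r1 (r2::ereal). {r. 1 < r \<and> Zf B r > 0} = {r. r1 < r \<and> ereal r < r2}
         \<and> ereal r1 < r2 \<and> (r2 = \<infinity> \<longleftrightarrow> B = 0)"
    proof (intro exI[of _ r1] exI[of _ "ereal r2"] conjI)
      show "{r. 1 < r \<and> Zf B r > 0} = {r. r1 < r \<and> ereal r < ereal r2}" by (rule P1)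
      show "ereal r1 < ereal r2" using R(2) by simp
      show "(ereal r2 = \<infinity>) = (B = 0)" using False by simp
    qed
    show ?thesis by (rule conjI[OF A conjI[OF P2 P3]])
  qed
qed


end
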